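(* Let $\{\Lambda_i\}_{i=1}^N$ be i.i.d. positive random variables with common distribution function $F_\Lambda$, and let $\Lambda$ denote a generic copy. Suppose there exist constants $c>0$ and $\tau>3$ such that $1-F_\Lambda(x)\le c x^{1-\tau}$ for all $x\ge0$, and that $\nu:=\mathbb E[\Lambda^2]/\mathbb E[\Lambda]>1$. Then there exists an event $\mathcal J$, which occurs with probability tending to $1$ as $N\to\infty$, such that conditionally on $\{\Lambda_i\}_{i=1}^N$ satisfying $\mathcal J$, the capacities $\lambda_i=\Lambda_i$ satisfy conditions (C1)–(C3) with $$\mu=\mathbb E[\Lambda],\quad \nu=\frac{\mathbb E[\Lambda^2]}{\mathbb E[\Lambda]},\quad f_n=\mathbb E\Big[e^{-\Lambda}\frac{\Lambda^n}{n!}\Big],\quad g_n=\frac1\mu\mathbb E\Big[e^{-\Lambda}\frac{\Lambda^{n+1}}{n!}\Big]\quad(n\ge0).$$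
   Context: For capacities $\lambda_1,\dots,\lambda_N>0$ (here random: $\lambda_i=\Lambda_i$): $\mu_N=\frac1N\sum_i\lambda_i$, $\nu_N=\sum_i\lambda_i^2/\sum_i\lambda_i$, $f^{(N)}_n=\frac1N\sum_{i} e^{-\lambda_i}\frac{\lambda_i^n}{n!}$, $g^{(N)}_n=\frac{1}{N\mu_N}\sum_{i} e^{-\lambda_i}\frac{\lambda_i^{n+1}}{n!}$ ($n\ge0$); $d_{TV}(p,q)=\frac12\sum_j|p_j-q_j|$. (C1): there are $\mu\in(0,\infty)$, $\nu\in(1,\infty)$, $\alpha_1>0$ with $|\mu_N-\mu|=O(N^{-\alpha_1})$, $|\nu_N-\nu|=O(N^{-\alpha_1})$. (C2): there are sequences $\{f_n\}$, $\{g_n\}$ independent of $N$ and $\alpha_2>0$ with $d_{TV}(f^{(N)},f)=O(N^{-\alpha_2})$, $d_{TV}(g^{(N)},g)=O(N^{-\alpha_2})$. (C3): there is $\tau>3$ such that for every $\varepsilon>0$ (with $\gamma:=\frac1{\tau-1}+\varepsilon<\frac12$), $\limsup_N\frac1N\sum_i\lambda_i^{\tau-1-\varepsilon}<\infty$ and $\max_i\lambda_i\le N^\gamma$. *)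

theory Defs
  imports "HOL-Probability.Probability"
begin

text \<open>Capacity vectors: for system size N the capacities are lam 0, ..., lam (N-1).\<close>

definition cap_mu :: "(nat \<Rightarrow> real) \<Rightarrow> nat \<Rightarrow> real" where
  "cap_mu lam N = (\<Sum>i<N. lam i) / real N"

definition cap_nu :: "(nat \<Rightarrow> real) \<Rightarrow> nat \<Rightarrow> real" where
  "cap_nu lam N = (\<Sum>i<N. (lam i)^2) / (\<Sum>i<N. lam i)"

definition cap_f :: "(nat \<Rightarrow> real) \<Rightarrow> nat \<Rightarrow> nat \<Rightarrow> real" where
  "cap_f lam N n = (\<Sum>i<N. exp (- lam i) * (lam i)^n / fact n) / real N"

definition cap_g :: "(nat \<Rightarrow> real) \<Rightarrow> nat \<Rightarrow> nat \<Rightarrow> real" where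
  "cap_g lam N n = (\<Sum>i<N. exp (- lam i) * (lam i)^(n+1) / fact n) / (real N * cap_mu lam N)"

definition dTV :: "(nat \<Rightarrow> real) \<Rightarrow> (nat \<Rightarrow> real) \<Rightarrow> real" where
  "dTV p q = (\<Sum>j. \<bar>p j - q j\<bar>) / 2"

text \<open>Conditions (C1)-(C3), required uniformly over a family S N of admissible
  capacity vectors for each system size N (the O-constants, exponents and thresholds
  do not depend on the particular vector).\<close>

definition cond_C1 :: "real \<Rightarrow> real \<Rightarrow> (nat \<Rightarrow> (nat \<Rightarrow> real) set) \<Rightarrow> bool" where
  "cond_C1 \<mu> \<nu> S \<longleftrightarrow> 0 < \<mu> \<and> 1 < \<nu> \<and>
     (\<exists>\<alpha>1 C N0. 0 < \<alpha>1 \<and> (\<forall>N\<ge>N0. \<forall>lam\<in>S N.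
        \<bar>cap_mu lam N - \<mu>\<bar> \<le> C * real N powr (-\<alpha>1) \<and>
        \<bar>cap_nu lam N - \<nu>\<bar> \<le> C * real N powr (-\<alpha>1)))"

definition cond_C2 :: "(nat \<Rightarrow> real) \<Rightarrow> (nat \<Rightarrow> real) \<Rightarrow> (nat \<Rightarrow> (nat \<Rightarrow> real) set) \<Rightarrow> bool" where
  "cond_C2 f g S \<longleftrightarrow>
     (\<exists>\<alpha>2 C N0. 0 < \<alpha>2 \<and> (\<forall>N\<ge>N0. \<forall>lam\<in>S N.
        dTV (cap_f lam N) f \<le> C * real N powr (-\<alpha>2) \<and>
        dTV (cap_g lam N) g \<le> C * real N powr (-\<alpha>2)))"

definition cond_C3 :: "(nat \<Rightarrow> (nat \<Rightarrow> real) set) \<Rightarrow> bool" where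
  "cond_C3 S \<longleftrightarrow> (\<exists>\<tau>::real. 3 < \<tau> \<and>
     (\<forall>\<epsilon>>0. 1 / (\<tau> - 1) + \<epsilon> < 1/2 \<longrightarrow>
        (\<exists>K N0. \<forall>N\<ge>N0. \<forall>lam\<in>S N.
            (\<Sum>i<N. lam i powr (\<tau> - 1 - \<epsilon>)) / real N \<le> K \<and>
            (\<forall>i<N. lam i \<le> real N powr (1 / (\<tau> - 1) + \<epsilon>)))))"

end

theory Submission
  imports Defs
begin

definition pp :: "nat \<Rightarrow> real \<Rightarrow> real" where
  "pp n x = exp (- x) * x ^ n / fact n"

lemma pp_nonneg: "0 \<le> x \<Longrightarrow> 0 \<le> pp n x"
  by (simp add: pp_def)

lemma pp_sum_le1:
  assumes "0 \<le> x" "finite F"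
  shows "(\<Sum>n\<in>F. pp n x) \<le> 1"
proof -
  have s: "summable (\<lambda>n. x ^ n / fact n)"
    using exp_converges[of x] by (simp add: sums_iff divide_inverse mult.commute)
  have e: "(\<Sum>n. x ^ n / fact n) = exp x"
    using exp_converges[of x] by (simp add: sums_iff divide_inverse mult.commute)
  have "(\<Sum>n\<in>F. x ^ n / fact n) \<le> exp x"
    using sum_le_suminf[OF s assms(2)] assms(1) e by auto
  hence "exp (-x) * (\<Sum>n\<in>F. x ^ n / fact n) \<le> exp (-x) * exp x"
    by (intro mult_left_mono) auto
  thus ?thesis by (simp add: pp_def sum_distrib_left exp_minus field_simps)
qed

lemma pp_Suc: "pp (Suc n) x = x / real (Suc n) * pp n x"
  by (simp add: pp_def field_simps)

lemma pp_tail: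
  assumes "0 \<le> x" "finite F" "1 \<le> m" "\<And>n. n \<in> F \<Longrightarrow> m \<le> n"
  shows "(\<Sum>n\<in>F. pp n x) \<le> x / real m"
proof -
  have "(\<Sum>n\<in>F. pp n x) \<le> (\<Sum>n\<in>F. x / real m * pp (n - 1) x)"
  proof (rule sum_mono)
    fix n assume n: "n \<in> F"
    then obtain k where k: "n = Suc k" using assms(3,4) by (metis Suc_pred' le_less_trans less_one not_less)
    have mn: "real m \<le> real n" using assms(4)[OF n] by simp
    have "pp n x = x / real n * pp k x" using pp_Suc k by simp
    also have "\<dots> \<le> x / real m * pp k x"
      using assms n k pp_nonneg[of x k] mn
      by (intro mult_right_mono divide_left_mono) auto
    finally show "pp n x \<le> x / real m * pp (n - 1) x" using k by simp
  qed
  also have "\<dots> = x / real m * (\<Sum>n\<in>F. pp (n - 1) x)" by (simp add: sum_distrib_left)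
  also have "(\<Sum>n\<in>F. pp (n - 1) x) = (\<Sum>k\<in>(\<lambda>n. n - 1) ` F. pp k x)"
  proof -
    have "inj_on (\<lambda>n. n - 1) F" using assms(3,4) by (intro inj_onI) (metis One_nat_def diff_Suc_1 le_add_diff_inverse2 le_trans)
    thus ?thesis by (simp add: sum.reindex)
  qed
  also have "x / real m * \<dots> \<le> x / real m * 1"
    using assms by (intro mult_left_mono pp_sum_le1) auto
  finally show ?thesis by simp
qed

lemma suminf_le_bound_nonneg:
  fixes a :: "nat \<Rightarrow> real"
  assumes "\<And>n. 0 \<le> a n" "\<And>K. (\<Sum>n<K. a n) \<le> B"
  shows "suminf a \<le> B"
proof -
  have "summable a" using assms by (intro summableI_nonneg_bounded) auto
  thus ?thesis using assms suminf_le_const by blast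
qed

lemma split_abs_sum:
  fixes x y :: "nat \<Rightarrow> real"
  assumes "\<And>n. 0 \<le> x n" "\<And>n. 0 \<le> y n"
  shows "(\<Sum>n<K. \<bar>x n - y n\<bar>) \<le> (\<Sum>n\<le>n0. \<bar>x n - y n\<bar>)
     + (\<Sum>n\<in>{n0<..<K}. x n) + (\<Sum>n\<in>{n0<..<K}. y n)"
proof -
  have "{..<K} \<subseteq> {..n0} \<union> {n0<..<K}" by auto
  hence "(\<Sum>n<K. \<bar>x n - y n\<bar>) \<le> (\<Sum>n\<in>{..n0} \<union> {n0<..<K}. \<bar>x n - y n\<bar>)"
    by (intro sum_mono2) auto
  also have "\<dots> \<le> (\<Sum>n\<le>n0. \<bar>x n - y n\<bar>) + (\<Sum>n\<in>{n0<..<K}. \<bar>x n - y n\<bar>)"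
    by (subst sum.union_disjoint) auto
  also have "(\<Sum>n\<in>{n0<..<K}. \<bar>x n - y n\<bar>) \<le> (\<Sum>n\<in>{n0<..<K}. x n + y n)"
    using assms by (intro sum_mono) (smt (verit))
  finally show ?thesis by (simp add: sum.distrib)
qed

lemma abs_prod_le: "\<bar>(a::real) * b\<bar> \<le> a^2 + b^2"
proof -
  have "2 * \<bar>a\<bar> * \<bar>b\<bar> \<le> \<bar>a\<bar>^2 + \<bar>b\<bar>^2" by (rule sum_squares_bound)
  moreover have "0 \<le> \<bar>a\<bar> * \<bar>b\<bar>" by simp
  moreover have "\<bar>a\<bar>^2 + \<bar>b\<bar>^2 = a^2 + b^2" by simp
  ultimately have "\<bar>a\<bar> * \<bar>b\<bar> \<le> a^2 + b^2" by linarith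
  thus ?thesis by (simp add: abs_mult)
qed

locale iid = prob_space M for M :: "'a measure" +
  fixes \<Lambda> :: "nat \<Rightarrow> 'a \<Rightarrow> real"
  assumes meas[measurable]: "\<And>i. \<Lambda> i \<in> borel_measurable M"
    and indep: "indep_vars (\<lambda>_. borel) \<Lambda> UNIV"
    and ident: "\<And>i. distr M borel (\<Lambda> i) = distr M borel (\<Lambda> 0)"
begin

lemma transfer:
  fixes h :: "real \<Rightarrow> real"
  assumes [measurable]: "h \<in> borel_measurable borel" and int: "integrable M (\<lambda>\<omega>. h (\<Lambda> 0 \<omega>))"
  shows "integrable M (\<lambda>\<omega>. h (\<Lambda> i \<omega>))" "(\<integral>\<omega>. h (\<Lambda> i \<omega>) \<partial>M) = (\<integral>\<omega>. h (\<Lambda> 0 \<omega>) \<partial>M)"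
proof -
  have "integrable (distr M borel (\<Lambda> 0)) h" using int by (subst integrable_distr_eq) auto
  hence "integrable (distr M borel (\<Lambda> i)) h" using ident[of i] by simp
  thus "integrable M (\<lambda>\<omega>. h (\<Lambda> i \<omega>))" by (subst (asm) integrable_distr_eq) auto
  have "(\<integral>\<omega>. h (\<Lambda> i \<omega>) \<partial>M) = (\<integral>x. h x \<partial>distr M borel (\<Lambda> i))"
    by (subst integral_distr) auto
  also have "\<dots> = (\<integral>x. h x \<partial>distr M borel (\<Lambda> 0))" using ident[of i] by simp
  also have "\<dots> = (\<integral>\<omega>. h (\<Lambda> 0 \<omega>) \<partial>M)" by (subst integral_distr) auto
  finally show "(\<integral>\<omega>. h (\<Lambda> i \<omega>) \<partial>M) = (\<integral>\<omega>. h (\<Lambda> 0 \<omega>) \<partial>M)" .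
qed

lemma prob_transfer:
  assumes "A \<in> sets borel"
  shows "prob {\<omega>\<in>space M. \<Lambda> i \<omega> \<in> A} = prob {\<omega>\<in>space M. \<Lambda> 0 \<omega> \<in> A}"
proof -
  have "prob {\<omega>\<in>space M. \<Lambda> i \<omega> \<in> A} = measure (distr M borel (\<Lambda> i)) A"
    using assms by (subst measure_distr) (auto simp: vimage_def Int_def conj_commute)
  also have "\<dots> = measure (distr M borel (\<Lambda> 0)) A" using ident[of i] by simp
  also have "\<dots> = prob {\<omega>\<in>space M. \<Lambda> 0 \<omega> \<in> A}"
    using assms by (subst measure_distr) (auto simp: vimage_def Int_def conj_commute)
  finally show ?thesis .
qed

lemma cheb_avg:
  fixes h :: "real \<Rightarrow> real"
  assumes hm[measurable]: "h \<in> borel_measurable borel"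
    and int2: "integrable M (\<lambda>\<omega>. (h (\<Lambda> 0 \<omega>))^2)"
    and N: "0 < N" and d: "0 < \<delta>"
  shows "prob {\<omega>\<in>space M. \<delta> \<le> \<bar>(\<Sum>i<N. h (\<Lambda> i \<omega>)) / real N - (\<integral>\<omega>. h (\<Lambda> 0 \<omega>) \<partial>M)\<bar>}
           \<le> (\<integral>\<omega>. (h (\<Lambda> 0 \<omega>))^2 \<partial>M) / (real N * \<delta>^2)"
proof -
  define m where "m = (\<integral>\<omega>. h (\<Lambda> 0 \<omega>) \<partial>M)"
  define Z where "Z i \<omega> = h (\<Lambda> i \<omega>) - m" for i \<omega>
  have int1: "integrable M (\<lambda>\<omega>. h (\<Lambda> 0 \<omega>))"
    by (rule square_integrable_imp_integrable[OF _ int2]) measurable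
  have hi2: "integrable M (\<lambda>\<omega>. (h (\<Lambda> i \<omega>))^2)" for i
    using transfer(1)[of "\<lambda>x. (h x)^2", OF _ int2] by simp
  have hi1: "integrable M (\<lambda>\<omega>. h (\<Lambda> i \<omega>))" for i
    using transfer(1)[OF hm int1] by simp
  have Zm[measurable]: "Z i \<in> borel_measurable M" for i unfolding Z_def by measurable
  have Zint: "integrable M (Z i)" for i unfolding Z_def using hi1 by auto
  have EZ: "(\<integral>\<omega>. Z i \<omega> \<partial>M) = 0" for i
    unfolding Z_def using hi1 transfer(2)[OF hm int1, of i] by (simp add: m_def prob_space)
  have Z2int: "integrable M (\<lambda>\<omega>. (Z i \<omega>)^2)" for i
    unfolding Z_def power2_diff using hi1 hi2 by (auto intro!: Bochner_Integration.integrable_diff)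
  have EZ2: "(\<integral>\<omega>. (Z i \<omega>)^2 \<partial>M) \<le> (\<integral>\<omega>. (h (\<Lambda> 0 \<omega>))^2 \<partial>M)" for i
  proof -
    have "(\<integral>\<omega>. (Z i \<omega>)^2 \<partial>M) = (\<integral>\<omega>. (h (\<Lambda> i \<omega>))^2 \<partial>M) - 2 * m * (\<integral>\<omega>. h (\<Lambda> i \<omega>) \<partial>M) + m^2"
      unfolding Z_def power2_diff using hi1 hi2 by (simp add: prob_space)
    also have "\<dots> = (\<integral>\<omega>. (h (\<Lambda> 0 \<omega>))^2 \<partial>M) - m^2"
      using transfer(2)[OF hm int1, of i] transfer(2)[of "\<lambda>x. (h x)^2", OF _ int2, of i]
      by (simp add: m_def power2_eq_square)
    finally show ?thesis by simp
  qed
  have ZZint: "integrable M (\<lambda>\<omega>. Z i \<omega> * Z j \<omega>)" for i j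
  proof (rule Bochner_Integration.integrable_bound[OF Bochner_Integration.integrable_add[OF Z2int[of i] Z2int[of j]]])
    show "AE x in M. norm (Z i x * Z j x) \<le> norm ((Z i x)^2 + (Z j x)^2)"
      by (intro AE_I2) (simp add: abs_prod_le)
  qed auto
  have cross: "(\<integral>\<omega>. Z i \<omega> * Z j \<omega> \<partial>M) = 0" if "i \<noteq> j" for i j
  proof -
    have ind: "indep_vars (\<lambda>_. borel) Z {i, j}"
      unfolding Z_def
      by (rule indep_vars_subset[OF indep_vars_compose2[OF indep, where Y="\<lambda>_ x. h x - m" and N="\<lambda>_. borel"]]) auto
    have "(\<integral>\<omega>. (\<Prod>k\<in>{i,j}. Z k \<omega>) \<partial>M) = (\<Prod>k\<in>{i,j}. \<integral>\<omega>. Z k \<omega> \<partial>M)"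
      by (rule indep_vars_lebesgue_integral[OF _ ind]) (auto intro: Zint)
    thus ?thesis using that EZ by simp
  qed
  define S where "S \<omega> = (\<Sum>i<N. Z i \<omega>)" for \<omega>
  have S2: "(S \<omega>)^2 = (\<Sum>i<N. \<Sum>j<N. Z i \<omega> * Z j \<omega>)" for \<omega>
    unfolding S_def power2_eq_square sum_product by simp
  have S2int: "integrable M (\<lambda>\<omega>. (S \<omega>)^2)" unfolding S2 using ZZint by auto
  have ES2: "(\<integral>\<omega>. (S \<omega>)^2 \<partial>M) \<le> real N * (\<integral>\<omega>. (h (\<Lambda> 0 \<omega>))^2 \<partial>M)"
  proof -
    have "(\<integral>\<omega>. (S \<omega>)^2 \<partial>M) = (\<Sum>i<N. \<Sum>j<N. \<integral>\<omega>. Z i \<omega> * Z j \<omega> \<partial>M)"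
      unfolding S2 using ZZint by (simp add: Bochner_Integration.integral_sum)
    also have "\<dots> = (\<Sum>i<N. \<integral>\<omega>. (Z i \<omega>)^2 \<partial>M)"
    proof (rule sum.cong[OF refl])
      fix i assume i: "i \<in> {..<N}"
      have "(\<Sum>j<N. \<integral>\<omega>. Z i \<omega> * Z j \<omega> \<partial>M) = (\<Sum>j\<in>{i}. \<integral>\<omega>. Z i \<omega> * Z j \<omega> \<partial>M)"
        using i cross by (intro sum.mono_neutral_right) auto
      thus "(\<Sum>j<N. \<integral>\<omega>. Z i \<omega> * Z j \<omega> \<partial>M) = (\<integral>\<omega>. (Z i \<omega>)^2 \<partial>M)"
        by (simp add: power2_eq_square)
    qed
    also have "\<dots> \<le> (\<Sum>i<N. (\<integral>\<omega>. (h (\<Lambda> 0 \<omega>))^2 \<partial>M))" by (intro sum_mono EZ2)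
    finally show ?thesis by simp
  qed
  have sub: "{\<omega>\<in>space M. \<delta> \<le> \<bar>(\<Sum>i<N. h (\<Lambda> i \<omega>)) / real N - m\<bar>}
      = {\<omega>\<in>space M. (real N * \<delta>)^2 \<le> (S \<omega>)^2}"
  proof -
    have "(\<Sum>i<N. h (\<Lambda> i \<omega>)) / real N - m = S \<omega> / real N" for \<omega>
      unfolding S_def Z_def using N by (simp add: sum_subtractf field_simps)
    moreover have "(\<delta> \<le> \<bar>s / real N\<bar>) \<longleftrightarrow> (real N * \<delta>)^2 \<le> s^2" for s
    proof -
      have "(\<delta> \<le> \<bar>s / real N\<bar>) \<longleftrightarrow> real N * \<delta> \<le> \<bar>s\<bar>" using N by (simp add: field_simps)
      also have "\<dots> \<longleftrightarrow> (real N * \<delta>)^2 \<le> s^2" using N d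
        by (metis abs_le_square_iff abs_of_pos mult_pos_pos of_nat_0_less_iff)
      finally show ?thesis .
    qed
    ultimately show ?thesis by simp
  qed
  have "prob {\<omega>\<in>space M. (real N * \<delta>)^2 \<le> (S \<omega>)^2} \<le> (\<integral>\<omega>. (S \<omega>)^2 \<partial>M) / (real N * \<delta>)^2"
    using N d by (intro integral_Markov_inequality_measure[OF S2int, where A="space M"]) auto
  also have "\<dots> \<le> real N * (\<integral>\<omega>. (h (\<Lambda> 0 \<omega>))^2 \<partial>M) / (real N * \<delta>)^2"
    using ES2 N d by (intro divide_right_mono) auto
  also have "\<dots> = (\<integral>\<omega>. (h (\<Lambda> 0 \<omega>))^2 \<partial>M) / (real N * \<delta>^2)"
    using N d by (simp add: power2_eq_square field_simps)
  finally show ?thesis using sub by (simp add: m_def)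
qed

end

lemma ennreal_suminf_upper_local: "(f::nat \<Rightarrow> ennreal) k \<le> suminf f"
  using sum_le_suminf[OF summableI, of "{k}" f] by simp

lemma dyadic_bound:
  fixes y r :: real
  assumes y: "0 < y" and r: "0 \<le> r"
  shows "ennreal (y powr r) \<le> 1 + (\<Sum>k. ennreal ((2 ^ Suc k) powr r) * indicator {x. (2::real) ^ k < x} y)"
proof (cases "y \<le> 1")
  case True
  have "y powr r \<le> 1" using True y r by (simp add: powr_le1)
  hence "ennreal (y powr r) \<le> 1" by (simp add: ennreal_le_1)
  also have "\<dots> \<le> 1 + (\<Sum>k. ennreal ((2 ^ Suc k) powr r) * indicator {x. (2::real) ^ k < x} y)" by simp
  finally show ?thesis .
next
  case False
  obtain n where n: "y < 2 ^ n" using real_arch_pow[of 2 y] by auto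
  define n0 where "n0 = (LEAST n. y \<le> (2::real) ^ n)"
  have le0: "y \<le> 2 ^ n0" unfolding n0_def by (rule LeastI[of _ n]) (use n in auto)
  have "n0 \<noteq> 0" using le0 False by (metis power_0)
  then obtain k where k: "n0 = Suc k" by (cases n0) auto
  have "\<not> y \<le> 2 ^ k" unfolding n0_def
  proof
    assume "y \<le> 2 ^ k"
    hence "n0 \<le> k" unfolding n0_def by (rule Least_le)
    thus False using k by simp
  qed
  hence lt: "2 ^ k < y" by simp
  have "y powr r \<le> (2 ^ Suc k) powr r" using le0 k y r by (intro powr_mono2) auto
  hence "ennreal (y powr r) \<le> ennreal ((2 ^ Suc k) powr r) * indicator {x. (2::real) ^ k < x} y"
    using lt by (simp add: ennreal_leI)
  also have "\<dots> \<le> (\<Sum>k. ennreal ((2 ^ Suc k) powr r) * indicator {x. (2::real) ^ k < x} y)"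
    by (rule ennreal_suminf_upper_local[where f="\<lambda>k. ennreal ((2 ^ Suc k) powr r) * indicator {x. (2::real) ^ k < x} y"])
  also have "\<dots> \<le> 1 + \<dots>" by simp
  finally show ?thesis .
qed

locale iid_tail = iid M \<Lambda> for M :: "'a measure" and \<Lambda> +
  fixes c t :: real
  assumes cpos: "0 < c" and t2: "2 < t"
    and pos: "\<And>i \<omega>. \<omega> \<in> space M \<Longrightarrow> 0 < \<Lambda> i \<omega>"
    and tail: "\<And>x. 0 < x \<Longrightarrow> 1 - prob {\<omega>\<in>space M. \<Lambda> 0 \<omega> \<le> x} \<le> c * x powr (- t)"
begin

lemma tail_gt: assumes "0 < x" shows "prob {\<omega>\<in>space M. x < \<Lambda> i \<omega>} \<le> c * x powr (- t)"
proof -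
  have "prob {\<omega>\<in>space M. x < \<Lambda> i \<omega>} = prob {\<omega>\<in>space M. \<Lambda> i \<omega> \<in> {x<..}}" by simp
  also have "\<dots> = prob {\<omega>\<in>space M. \<Lambda> 0 \<omega> \<in> {x<..}}" by (rule prob_transfer) auto
  also have "{\<omega>\<in>space M. \<Lambda> 0 \<omega> \<in> {x<..}} = space M - {\<omega>\<in>space M. \<Lambda> 0 \<omega> \<le> x}" by auto
  also have "prob \<dots> = 1 - prob {\<omega>\<in>space M. \<Lambda> 0 \<omega> \<le> x}" by (rule prob_compl) measurable
  also have "\<dots> \<le> c * x powr (- t)" using tail[OF assms] .
  finally show ?thesis .
qed

lemma moment_integrable:
  assumes r: "0 \<le> r" "r < t"
  shows "integrable M (\<lambda>\<omega>. \<Lambda> 0 \<omega> powr r)"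
proof (rule integrableI_nonneg)
  show "(\<lambda>\<omega>. \<Lambda> 0 \<omega> powr r) \<in> borel_measurable M" by measurable
  show "AE x in M. 0 \<le> \<Lambda> 0 x powr r" by simp
  define q where "q = (2::real) powr (r - t)"
  have q: "0 \<le> q" "q < 1" unfolding q_def using r by (auto intro!: powr_less_one)
  define F where "F k \<omega> = ennreal ((2 ^ Suc k) powr r) * indicator {\<omega>\<in>space M. (2::real) ^ k < \<Lambda> 0 \<omega>} \<omega>" for k \<omega>
  have "(\<integral>\<^sup>+\<omega>. ennreal (\<Lambda> 0 \<omega> powr r) \<partial>M) \<le> (\<integral>\<^sup>+\<omega>. 1 + (\<Sum>k. F k \<omega>) \<partial>M)"
  proof (rule nn_integral_mono)
    fix \<omega> assume \<omega>: "\<omega> \<in> space M"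
    have "ennreal (\<Lambda> 0 \<omega> powr r) \<le> 1 + (\<Sum>k. ennreal ((2 ^ Suc k) powr r) * indicator {x. (2::real) ^ k < x} (\<Lambda> 0 \<omega>))"
      by (rule dyadic_bound[OF pos[OF \<omega>] r(1)])
    also have "\<dots> = 1 + (\<Sum>k. F k \<omega>)" using \<omega> by (simp add: F_def indicator_def)
    finally show "ennreal (\<Lambda> 0 \<omega> powr r) \<le> 1 + (\<Sum>k. F k \<omega>)" .
  qed
  also have "\<dots> = (\<integral>\<^sup>+\<omega>. 1 \<partial>M) + (\<integral>\<^sup>+\<omega>. (\<Sum>k. F k \<omega>) \<partial>M)"
    by (rule nn_integral_add) (auto simp: F_def)
  also have "(\<integral>\<^sup>+\<omega>. (\<Sum>k. F k \<omega>) \<partial>M) = (\<Sum>k. \<integral>\<^sup>+\<omega>. F k \<omega> \<partial>M)"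
    by (rule nn_integral_suminf) (simp add: F_def)
  also have "\<dots> \<le> (\<Sum>k. ennreal (c * 2 powr r * q ^ k))"
  proof (rule suminf_le[OF _ summableI summableI])
    fix k
    have "(\<integral>\<^sup>+\<omega>. F k \<omega> \<partial>M) = ennreal ((2 ^ Suc k) powr r) * emeasure M {\<omega>\<in>space M. (2::real) ^ k < \<Lambda> 0 \<omega>}"
      unfolding F_def by (rule nn_integral_cmult_indicator) measurable
    also have "\<dots> = ennreal ((2 ^ Suc k) powr r * prob {\<omega>\<in>space M. (2::real) ^ k < \<Lambda> 0 \<omega>})"
      by (simp add: emeasure_eq_measure ennreal_mult)
    also have "\<dots> \<le> ennreal ((2 ^ Suc k) powr r * (c * (2 ^ k) powr (- t)))"
      by (intro ennreal_leI mult_left_mono tail_gt) auto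
    also have "(2 ^ Suc k) powr r * (c * (2 ^ k) powr (- t)) = c * 2 powr r * q ^ k"
    proof -
      have a: "((2::real) ^ Suc k) powr r = 2 powr r * 2 powr (real k * r)"
      proof -
        have "((2::real) ^ Suc k) = 2 powr real (Suc k)" by (metis powr_realpow zero_less_numeral)
        hence "((2::real) ^ Suc k) powr r = 2 powr (real (Suc k) * r)" by (simp add: powr_powr)
        also have "real (Suc k) * r = r + real k * r" by (simp add: algebra_simps)
        finally show ?thesis by (simp add: powr_add)
      qed
      have b: "((2::real) ^ k) powr (- t) = 2 powr (real k * (- t))"
      proof -
        have "((2::real) ^ k) = 2 powr real k" by (metis powr_realpow zero_less_numeral)
        thus ?thesis by (simp add: powr_powr)
      qed
      have "q ^ k = 2 powr (real k * (r - t))" unfolding q_def by (simp add: powr_power)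
      thus ?thesis using a b by (simp add: powr_add[symmetric] algebra_simps)
    qed
    finally show "(\<integral>\<^sup>+\<omega>. F k \<omega> \<partial>M) \<le> ennreal (c * 2 powr r * q ^ k)" .
  qed
  also have "\<dots> = ennreal (c * 2 powr r * (1 / (1 - q)))"
    using q cpos by (intro suminf_ennreal_eq sums_mult geometric_sums) auto
  finally have le: "(\<integral>\<^sup>+\<omega>. ennreal (\<Lambda> 0 \<omega> powr r) \<partial>M) \<le> 1 + ennreal (c * 2 powr r * (1 / (1 - q)))"
    by (simp add: emeasure_space_1)
  have "1 + ennreal (c * 2 powr r * (1 / (1 - q))) < \<infinity>"
    by (simp add: less_top[symmetric] ennreal_add_eq_top)
  with le show "(\<integral>\<^sup>+\<omega>. ennreal (\<Lambda> 0 \<omega> powr r) \<partial>M) < \<infinity>" by (rule le_less_trans)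
qed

end

context iid_tail begin

lemma cheb_dom:
  fixes h g :: "real \<Rightarrow> real"
  assumes hm[measurable]: "h \<in> borel_measurable borel" and gm[measurable]: "g \<in> borel_measurable borel"
    and gi: "integrable M (\<lambda>\<omega>. g (\<Lambda> 0 \<omega>))"
    and hg: "\<And>x. 0 < x \<Longrightarrow> (h x)^2 \<le> g x"
    and N: "0 < N" and d: "0 < \<delta>"
  shows "prob {\<omega>\<in>space M. \<delta> \<le> \<bar>(\<Sum>i<N. h (\<Lambda> i \<omega>)) / real N - (\<integral>\<omega>. h (\<Lambda> 0 \<omega>) \<partial>M)\<bar>}
           \<le> (\<integral>\<omega>. g (\<Lambda> 0 \<omega>) \<partial>M) / (real N * \<delta>^2)"
proof -
  have i2: "integrable M (\<lambda>\<omega>. (h (\<Lambda> 0 \<omega>))^2)"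
  proof (rule Bochner_Integration.integrable_bound[OF gi])
    show "(\<lambda>\<omega>. (h (\<Lambda> 0 \<omega>))^2) \<in> borel_measurable M" by measurable
    show "AE x in M. norm ((h (\<Lambda> 0 x))^2) \<le> norm (g (\<Lambda> 0 x))"
      using hg pos by (intro AE_I2) (smt (verit) real_norm_def zero_le_power2)
  qed
  have "(\<integral>\<omega>. (h (\<Lambda> 0 \<omega>))^2 \<partial>M) \<le> (\<integral>\<omega>. g (\<Lambda> 0 \<omega>) \<partial>M)"
    using hg pos by (intro integral_mono[OF i2 gi]) auto
  hence "(\<integral>\<omega>. (h (\<Lambda> 0 \<omega>))^2 \<partial>M) / (real N * \<delta>^2) \<le> (\<integral>\<omega>. g (\<Lambda> 0 \<omega>) \<partial>M) / (real N * \<delta>^2)"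
    using N d by (intro divide_right_mono) auto
  with cheb_avg[OF hm i2 N d] show ?thesis by linarith
qed

lemma integrable_powr_pos:
  assumes "0 \<le> p" "p < t"
  shows "integrable M (\<lambda>\<omega>. \<Lambda> i \<omega> powr p)"
  using transfer(1)[of "\<lambda>x. x powr p", OF _ moment_integrable[OF assms]] by simp

lemma integral_powr_transfer:
  assumes "0 \<le> p" "p < t"
  shows "(\<integral>\<omega>. \<Lambda> i \<omega> powr p \<partial>M) = (\<integral>\<omega>. \<Lambda> 0 \<omega> powr p \<partial>M)"
  using transfer(2)[of "\<lambda>x. x powr p", OF _ moment_integrable[OF assms]] by simp

lemma integrable_pow2: "integrable M (\<lambda>\<omega>. (\<Lambda> 0 \<omega>)^2)"
proof -
  have "integrable M (\<lambda>\<omega>. \<Lambda> 0 \<omega> powr 2)" using moment_integrable[of 2] t2 by simp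
  thus ?thesis
    by (rule Bochner_Integration.integrable_cong[THEN iffD1, rotated -1]) (use pos in \<open>auto simp: powr_realpow[symmetric]\<close>)
qed

lemma integrable_id: "integrable M (\<lambda>\<omega>. \<Lambda> 0 \<omega>)"
proof -
  have "integrable M (\<lambda>\<omega>. \<Lambda> 0 \<omega> powr 1)" using moment_integrable[of 1] t2 by simp
  thus ?thesis
    by (rule Bochner_Integration.integrable_cong[THEN iffD1, rotated -1]) (use pos in \<open>auto intro!: abs_of_pos\<close>)
qed

end

definition qq :: "nat \<Rightarrow> real \<Rightarrow> real" where
  "qq n x = exp (- x) * x ^ (n + 1) / fact n"

lemma qq_eq: "qq n x = x * pp n x"
  by (simp add: qq_def pp_def)

lemma pp_le1: "0 \<le> x \<Longrightarrow> pp n x \<le> 1"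
  using pp_sum_le1[of x "{n}"] by simp

context iid_tail begin

definition "dd = min ((t - 2) / 3) (1/2)"
definition "ss = 2 + dd"
definition "rr = 2 + 2 * dd"
definition "al = min (1/8) (3 * dd / (4 * ss))"
definition "TT N = real N powr (1 / ss)"
definition "nn0 N = nat \<lfloor>real N powr (1/8)\<rfloor>"
definition "dl N = real N powr (- 1/4)"
definition "ep N = real N powr (- al)"
definition "h2 N x = (if x \<le> TT N then x^2 else 0)"
definition "h3 N x = (if x \<le> TT N then x powr ss else 0)"
definition "avg N h \<omega> = (\<Sum>i<N. h (\<Lambda> i \<omega>)) / real N"
definition "ex h = (\<integral>\<omega>. h (\<Lambda> 0 \<omega>) \<partial>M)"
definition "mr = (\<integral>\<omega>. \<Lambda> 0 \<omega> powr rr \<partial>M)"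
definition "m2 = (\<integral>\<omega>. (\<Lambda> 0 \<omega>)^2 \<partial>M)"

definition "B0 N = {\<omega>\<in>space M. \<exists>i<N. TT N < \<Lambda> i \<omega>}"
definition "B1 N = {\<omega>\<in>space M. ep N \<le> \<bar>avg N (\<lambda>x. x) \<omega> - ex (\<lambda>x. x)\<bar>}"
definition "B2 N = {\<omega>\<in>space M. ep N \<le> \<bar>avg N (h2 N) \<omega> - ex (h2 N)\<bar>}"
definition "B3 N = {\<omega>\<in>space M. 1 \<le> \<bar>avg N (h3 N) \<omega> - ex (h3 N)\<bar>}"
definition "B4 N = {\<omega>\<in>space M. \<exists>n\<le>nn0 N. dl N \<le> \<bar>avg N (pp n) \<omega> - ex (pp n)\<bar>}"
definition "B5 N = {\<omega>\<in>space M. \<exists>n\<le>nn0 N. dl N \<le> \<bar>avg N (qq n) \<omega> - ex (qq n)\<bar>}"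
definition "JJ N = space M - (B0 N \<union> B1 N \<union> B2 N \<union> B3 N \<union> B4 N \<union> B5 N)"

lemma dd: "0 < dd" "dd \<le> (t - 2) / 3" "dd \<le> 1/2"
  using t2 unfolding dd_def min_def by auto
lemma ss: "2 < ss" "ss < rr" "rr < t" "rr \<le> 3" "2 < rr"
  using dd by (auto simp: ss_def rr_def)
lemma al: "0 < al" "al \<le> 1/8" "al \<le> 3 * dd / (4 * ss)"
  using dd ss by (auto simp: al_def)

lemma pp_meas[measurable]: "pp n \<in> borel_measurable borel"
  unfolding pp_def by measurable
lemma qq_meas[measurable]: "qq n \<in> borel_measurable borel"
  unfolding qq_def by measurable
lemma h2_meas[measurable]: "h2 N \<in> borel_measurable borel"
  unfolding h2_def by measurable
lemma h3_meas[measurable]: "h3 N \<in> borel_measurable borel"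
  unfolding h3_def by measurable
lemma avg_meas[measurable]:
  assumes [measurable]: "h \<in> borel_measurable borel" shows "avg N h \<in> borel_measurable M"
  unfolding avg_def by measurable

lemma B_sets: "B0 N \<in> sets M" "B1 N \<in> sets M" "B2 N \<in> sets M" "B3 N \<in> sets M" "B4 N \<in> sets M" "B5 N \<in> sets M"
  unfolding B0_def B1_def B2_def B3_def B4_def B5_def by measurable

lemma JJ_sets: "JJ N \<in> sets M"
  unfolding JJ_def using B_sets by auto

end

lemma powr_frac: "0 < (x::real) \<Longrightarrow> x powr a / (x * x powr b) = x powr (a - 1 - b)"
proof -
  assume x: "0 < x"
  have "x * x powr b = x powr (1 + b)" using x by (simp add: powr_add)
  thus ?thesis using x by (simp add: powr_diff[symmetric] algebra_simps)
qed

lemma powr_sq: "0 < (x::real) \<Longrightarrow> (x powr a)^2 = x powr (2 * a)"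
  by (simp add: powr_power)

context iid_tail begin

lemma TT_pos: "0 < N \<Longrightarrow> 0 < TT N" by (simp add: TT_def)

lemma P0: assumes N: "0 < N" shows "prob (B0 N) \<le> c * real N powr (1 - t / ss)"
proof -
  have "B0 N = (\<Union>i\<in>{..<N}. {\<omega>\<in>space M. TT N < \<Lambda> i \<omega>})" by (auto simp: B0_def)
  hence "prob (B0 N) \<le> (\<Sum>i<N. prob {\<omega>\<in>space M. TT N < \<Lambda> i \<omega>})"
    by (simp add: measure_UNION_le)
  also have "\<dots> \<le> (\<Sum>i<N. c * TT N powr (- t))"
    by (intro sum_mono tail_gt TT_pos N)
  also have "\<dots> = c * (real N * real N powr (- t / ss))"
    using N by (simp add: TT_def powr_powr)
  also have "real N * real N powr (- t / ss) = real N powr (1 - t / ss)"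
  proof -
    have "real N powr (1 - t / ss) = real N powr 1 / real N powr (t / ss)" by (rule powr_diff)
    thus ?thesis using N by (simp add: powr_minus_divide)
  qed
  finally show ?thesis .
qed

lemma P1: assumes N: "0 < N" shows "prob (B1 N) \<le> m2 * real N powr (2 * al - 1)"
proof -
  have "prob (B1 N) \<le> m2 / (real N * (ep N)^2)"
    unfolding B1_def avg_def ex_def m2_def
  proof (rule cheb_dom[OF _ _ integrable_pow2 _ N])
    show "(\<lambda>x::real. x) \<in> borel_measurable borel" by measurable
    show "(\<lambda>x::real. x^2) \<in> borel_measurable borel" by measurable
    show "0 < ep N" by (simp add: ep_def N)
  qed simp
  also have "\<dots> = m2 * (real N powr 0 / (real N * real N powr (- 2 * al)))"
    using N by (simp add: ep_def powr_sq)
  also have "\<dots> = m2 * real N powr (2 * al - 1)"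
    using N by (subst powr_frac) (auto simp: algebra_simps)
  finally show ?thesis .
qed

lemma P2: assumes N: "0 < N" shows "prob (B2 N) \<le> mr * real N powr ((4 - rr) / ss + 2 * al - 1)"
proof -
  define g where "g x = TT N powr (4 - rr) * x powr rr" for x
  have gi: "integrable M (\<lambda>\<omega>. g (\<Lambda> 0 \<omega>))" unfolding g_def
    using moment_integrable[of rr] ss by auto
  have hg: "(h2 N x)^2 \<le> g x" if x: "0 < x" for x
  proof (cases "x \<le> TT N")
    case True
    have "(h2 N x)^2 = x powr 4" using True x by (simp add: h2_def powr_realpow)
    also have "\<dots> = x powr rr * x powr (4 - rr)" using x by (simp add: powr_add[symmetric])
    also have "\<dots> \<le> x powr rr * TT N powr (4 - rr)"
      using True x ss by (intro mult_left_mono powr_mono2) auto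
    finally show ?thesis by (simp add: g_def mult.commute)
  next
    case False thus ?thesis by (simp add: h2_def g_def)
  qed
  have "prob (B2 N) \<le> (\<integral>\<omega>. g (\<Lambda> 0 \<omega>) \<partial>M) / (real N * (ep N)^2)"
    unfolding B2_def avg_def ex_def
  proof (rule cheb_dom[OF _ _ gi hg N])
    show "g \<in> borel_measurable borel" unfolding g_def by measurable
    show "0 < ep N" by (simp add: ep_def N)
  qed measurable
  also have "(\<integral>\<omega>. g (\<Lambda> 0 \<omega>) \<partial>M) = real N powr ((4 - rr) / ss) * mr"
    using N by (simp add: g_def mr_def TT_def powr_powr)
  also have "real N powr ((4 - rr) / ss) * mr / (real N * (ep N)^2) = mr * (real N powr ((4 - rr) / ss) / (real N * real N powr (- 2 * al)))"
    using N by (simp add: ep_def powr_sq)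
  also have "\<dots> = mr * real N powr ((4 - rr) / ss + 2 * al - 1)"
    using N by (subst powr_frac) (auto simp: algebra_simps)
  finally show ?thesis .
qed

lemma P3: assumes N: "0 < N" shows "prob (B3 N) \<le> mr * real N powr ((2 * ss - rr) / ss - 1)"
proof -
  define g where "g x = TT N powr (2 * ss - rr) * x powr rr" for x
  have gi: "integrable M (\<lambda>\<omega>. g (\<Lambda> 0 \<omega>))" unfolding g_def
    using moment_integrable[of rr] ss by auto
  have hg: "(h3 N x)^2 \<le> g x" if x: "0 < x" for x
  proof (cases "x \<le> TT N")
    case True
    have "(h3 N x)^2 = x powr (2 * ss)" using True x by (simp add: h3_def powr_sq)
    also have "\<dots> = x powr rr * x powr (2 * ss - rr)" using x by (simp add: powr_add[symmetric])
    also have "\<dots> \<le> x powr rr * TT N powr (2 * ss - rr)"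
      using True x ss by (intro mult_left_mono powr_mono2) auto
    finally show ?thesis by (simp add: g_def mult.commute)
  next
    case False thus ?thesis by (simp add: h3_def g_def)
  qed
  have "prob (B3 N) \<le> (\<integral>\<omega>. g (\<Lambda> 0 \<omega>) \<partial>M) / (real N * 1^2)"
    unfolding B3_def avg_def ex_def
  proof (rule cheb_dom[OF _ _ gi hg N])
    show "g \<in> borel_measurable borel" unfolding g_def by measurable
  qed (rule h3_meas, simp, simp)
  also have "(\<integral>\<omega>. g (\<Lambda> 0 \<omega>) \<partial>M) = real N powr ((2 * ss - rr) / ss) * mr"
    using N by (simp add: g_def mr_def TT_def powr_powr)
  also have "real N powr ((2 * ss - rr) / ss) * mr / (real N * 1^2) = mr * (real N powr ((2 * ss - rr) / ss) / (real N * real N powr 0))"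
    using N by simp
  also have "\<dots> = mr * real N powr ((2 * ss - rr) / ss - 1)"
    using N by (subst powr_frac) (auto simp: algebra_simps)
  finally show ?thesis .
qed

lemma nn0_bound: assumes N: "0 < N" shows "real (nn0 N) + 1 \<le> 2 * real N powr (1/8)"
  "real N powr (1/8) < real (nn0 N) + 1"
proof -
  have ge1: "1 \<le> real N powr (1/8)" using N by (simp add: ge_one_powr_ge_zero)
  have "real (nn0 N) \<le> real N powr (1/8)" unfolding nn0_def using ge1 by simp
  thus "real (nn0 N) + 1 \<le> 2 * real N powr (1/8)" using ge1 by simp
  show "real N powr (1/8) < real (nn0 N) + 1" unfolding nn0_def using ge1
    by (simp add: of_nat_nat)
qed

lemma P45_aux: assumes N: "0 < N"
  shows "(real (nn0 N) + 1) / (real N * (dl N)^2) \<le> 2 * real N powr (- 3/8)"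
proof -
  have "(real (nn0 N) + 1) / (real N * (dl N)^2) \<le> 2 * real N powr (1/8) / (real N * (dl N)^2)"
    using N nn0_bound(1)[OF N] by (intro divide_right_mono) (auto simp: dl_def)
  also have "\<dots> = 2 * (real N powr (1/8) / (real N * real N powr (- 1/2)))"
    using N by (simp add: dl_def powr_sq)
  also have "\<dots> = 2 * real N powr (- 3/8)"
    using N by (subst powr_frac) auto
  finally show ?thesis .
qed

lemma P4: assumes N: "0 < N" shows "prob (B4 N) \<le> 2 * real N powr (- 3/8)"
proof -
  have "B4 N = (\<Union>n\<in>{..nn0 N}. {\<omega>\<in>space M. dl N \<le> \<bar>avg N (pp n) \<omega> - ex (pp n)\<bar>})" by (auto simp: B4_def)
  hence "prob (B4 N) \<le> (\<Sum>n\<le>nn0 N. prob {\<omega>\<in>space M. dl N \<le> \<bar>avg N (pp n) \<omega> - ex (pp n)\<bar>})"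
    by (simp add: measure_UNION_le)
  also have "\<dots> \<le> (\<Sum>n\<le>nn0 N. 1 / (real N * (dl N)^2))"
  proof (rule sum_mono)
    fix n
    have hg: "(pp n x)^2 \<le> 1" if "0 < x" for x
      using pp_nonneg[of x n] pp_le1[of x n] that by (simp add: power_le_one)
    show "prob {\<omega>\<in>space M. dl N \<le> \<bar>avg N (pp n) \<omega> - ex (pp n)\<bar>} \<le> 1 / (real N * (dl N)^2)"
      unfolding avg_def ex_def
      using cheb_dom[where h="pp n" and g="\<lambda>_. 1", OF pp_meas borel_measurable_const _ hg N, of "dl N"] N by (simp add: dl_def prob_space)
  qed
  also have "\<dots> = (real (nn0 N) + 1) / (real N * (dl N)^2)" by simp
  also have "\<dots> \<le> 2 * real N powr (- 3/8)" by (rule P45_aux[OF N])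
  finally show ?thesis .
qed

lemma P5: assumes N: "0 < N" shows "prob (B5 N) \<le> m2 * (2 * real N powr (- 3/8))"
proof -
  have "B5 N = (\<Union>n\<in>{..nn0 N}. {\<omega>\<in>space M. dl N \<le> \<bar>avg N (qq n) \<omega> - ex (qq n)\<bar>})" by (auto simp: B5_def)
  hence "prob (B5 N) \<le> (\<Sum>n\<le>nn0 N. prob {\<omega>\<in>space M. dl N \<le> \<bar>avg N (qq n) \<omega> - ex (qq n)\<bar>})"
    by (simp add: measure_UNION_le)
  also have "\<dots> \<le> (\<Sum>n\<le>nn0 N. m2 / (real N * (dl N)^2))"
  proof (rule sum_mono)
    fix n
    have hg: "(qq n x)^2 \<le> x^2" if "0 < x" for x
    proof -
      have "(pp n x)^2 \<le> 1" using pp_nonneg[of x n] pp_le1[of x n] that by (simp add: power_le_one)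
      hence "x^2 * (pp n x)^2 \<le> x^2 * 1" by (intro mult_left_mono) auto
      thus ?thesis by (simp add: qq_eq power_mult_distrib)
    qed
    have gm: "(\<lambda>x::real. x^2) \<in> borel_measurable borel" by measurable
    show "prob {\<omega>\<in>space M. dl N \<le> \<bar>avg N (qq n) \<omega> - ex (qq n)\<bar>} \<le> m2 / (real N * (dl N)^2)"
      unfolding avg_def ex_def m2_def
      using cheb_dom[where h="qq n" and g="\<lambda>x. x^2", OF qq_meas gm integrable_pow2 hg N, of "dl N"] N by (simp add: dl_def)
  qed
  also have "\<dots> = m2 * ((real (nn0 N) + 1) / (real N * (dl N)^2))" by simp
  also have "\<dots> \<le> m2 * (2 * real N powr (- 3/8))"
  proof (rule mult_left_mono[OF P45_aux[OF N]])
    show "0 \<le> m2" unfolding m2_def by simp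
  qed
  finally show ?thesis .
qed

end

lemma powr_to_0: "e < 0 \<Longrightarrow> (\<lambda>N. C * real N powr e) \<longlonglongrightarrow> 0"
  using tendsto_mult_right_zero[OF tendsto_neg_powr[OF _ filterlim_real_sequentially]] by auto

context iid_tail begin

definition "bnd N = c * real N powr (1 - t / ss) + m2 * real N powr (2 * al - 1)
  + mr * real N powr ((4 - rr) / ss + 2 * al - 1) + mr * real N powr ((2 * ss - rr) / ss - 1)
  + 2 * real N powr (- 3/8) + m2 * (2 * real N powr (- 3/8))"

lemma JJ_prob: assumes N: "0 < N" shows "1 - bnd N \<le> prob (JJ N)"
proof -
  note S = B_sets[of N]
  let ?U = "B0 N \<union> B1 N \<union> B2 N \<union> B3 N \<union> B4 N \<union> B5 N"
  have U: "?U \<in> sets M" using S by auto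
  have "prob ?U \<le> prob (B0 N) + prob (B1 N) + prob (B2 N) + prob (B3 N) + prob (B4 N) + prob (B5 N)"
    using S by (smt (verit) measure_Un_le sets.Un)
  also have "\<dots> \<le> bnd N" unfolding bnd_def using P0[OF N] P1[OF N] P2[OF N] P3[OF N] P4[OF N] P5[OF N] by linarith
  finally have "prob ?U \<le> bnd N" .
  moreover have "prob (JJ N) = 1 - prob ?U" unfolding JJ_def using U by (rule prob_compl)
  ultimately show ?thesis by linarith
qed

lemma exps: "1 - t / ss < 0" "2 * al - 1 < 0" "(4 - rr) / ss + 2 * al - 1 < 0" "(2 * ss - rr) / ss - 1 < 0"
proof -
  show "1 - t / ss < 0" using ss by (simp add: field_simps)
  show "2 * al - 1 < 0" using al by simp
  show "(2 * ss - rr) / ss - 1 < 0" using ss by (simp add: field_simps)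
  have "2 * al \<le> 3 * dd / (2 * ss)" using al(3) by simp
  moreover have "(4 - rr) / ss + 3 * dd / (2 * ss) - 1 < 0"
  proof -
    have "(4 - rr) / ss + 3 * dd / (2 * ss) = (4 - rr + 3 * dd / 2) / ss"
      by (simp add: add_divide_distrib)
    moreover have "4 - rr + 3 * dd / 2 < ss" using dd by (simp add: rr_def ss_def)
    ultimately show ?thesis using ss by simp
  qed
  ultimately show "(4 - rr) / ss + 2 * al - 1 < 0" by linarith
qed

lemma bnd_lim: "bnd \<longlonglongrightarrow> 0"
proof -
  have "(\<lambda>N. bnd N) \<longlonglongrightarrow> 0 + 0 + 0 + 0 + 0 + 0"
    unfolding bnd_def
    using tendsto_mult[OF tendsto_const[of m2] powr_to_0[of "-3/8" 2]]
    by (intro tendsto_add powr_to_0 exps) auto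
  thus ?thesis by simp
qed

lemma JJ_lim: "(\<lambda>N. prob (JJ N)) \<longlonglongrightarrow> 1"
proof (rule tendsto_sandwich[where f="\<lambda>N. 1 - bnd N" and h="\<lambda>N. 1"])
  show "\<forall>\<^sub>F N in sequentially. 1 - bnd N \<le> prob (JJ N)"
    using eventually_gt_at_top[of 0] by eventually_elim (rule JJ_prob)
  show "\<forall>\<^sub>F N in sequentially. prob (JJ N) \<le> 1" by simp
  show "(\<lambda>N. 1 - bnd N) \<longlonglongrightarrow> 1" using tendsto_diff[OF tendsto_const bnd_lim, of 1] by simp
qed simp

end

context iid_tail begin

definition "mu = ex (\<lambda>x. x)"
definition "ms = ex (\<lambda>x. x powr ss)"

lemma pp_int: "integrable M (\<lambda>\<omega>. pp n (\<Lambda> 0 \<omega>))"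
proof (rule integrable_const_bound[where B=1])
  show "AE x in M. norm (pp n (\<Lambda> 0 x)) \<le> 1"
    using pos by (intro AE_I2) (simp add: abs_of_nonneg pp_nonneg pp_le1 less_imp_le)
qed measurable

lemma qq_int: "integrable M (\<lambda>\<omega>. qq n (\<Lambda> 0 \<omega>))"
proof (rule Bochner_Integration.integrable_bound[OF integrable_id])
  show "AE x in M. norm (qq n (\<Lambda> 0 x)) \<le> norm (\<Lambda> 0 x)"
  proof (intro AE_I2)
    fix x assume x: "x \<in> space M"
    have p: "0 < \<Lambda> 0 x" using pos[OF x] .
    have "\<Lambda> 0 x * pp n (\<Lambda> 0 x) \<le> \<Lambda> 0 x * 1"
      using p by (intro mult_left_mono pp_le1) auto
    thus "norm (qq n (\<Lambda> 0 x)) \<le> norm (\<Lambda> 0 x)"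
      using p pp_nonneg[of "\<Lambda> 0 x" n] by (simp add: qq_eq abs_mult)
  qed
qed measurable

lemma ex_nonneg: fixes h :: "real \<Rightarrow> real" assumes "\<And>x. 0 < x \<Longrightarrow> 0 \<le> h x" shows "0 \<le> ex h"
  unfolding ex_def by (rule integral_nonneg_AE) (intro AE_I2, simp add: assms pos)

lemma ex_pp_nonneg: "0 \<le> ex (pp n)" by (rule ex_nonneg) (simp add: pp_nonneg)
lemma ex_qq_nonneg: "0 \<le> ex (qq n)" by (rule ex_nonneg) (simp add: qq_eq pp_nonneg)

lemma ex_mono:
  fixes h g :: "real \<Rightarrow> real"
  assumes "integrable M (\<lambda>\<omega>. h (\<Lambda> 0 \<omega>))" "integrable M (\<lambda>\<omega>. g (\<Lambda> 0 \<omega>))"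
    "\<And>x. 0 < x \<Longrightarrow> h x \<le> g x"
  shows "ex h \<le> ex g"
  unfolding ex_def by (rule integral_mono_AE[OF assms(1,2)]) (intro AE_I2, simp add: assms(3) pos)

lemma sum_ex: fixes h :: "nat \<Rightarrow> real \<Rightarrow> real" shows "finite F \<Longrightarrow> (\<And>n. integrable M (\<lambda>\<omega>. h n (\<Lambda> 0 \<omega>))) \<Longrightarrow>
    (\<Sum>n\<in>F. ex (h n)) = ex (\<lambda>x. \<Sum>n\<in>F. h n x)"
  unfolding ex_def by (simp add: Bochner_Integration.integral_sum)

lemma sum_ex_pp_tail:
  assumes F: "finite F" "1 \<le> m" "\<And>n. n \<in> F \<Longrightarrow> m \<le> n"
  shows "(\<Sum>n\<in>F. ex (pp n)) \<le> mu / real m"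
proof -
  have "(\<Sum>n\<in>F. ex (pp n)) = ex (\<lambda>x. \<Sum>n\<in>F. pp n x)" using F pp_int by (intro sum_ex) auto
  also have "\<dots> \<le> ex (\<lambda>x. x / real m)"
  proof (rule ex_mono)
    show "integrable M (\<lambda>\<omega>. \<Sum>n\<in>F. pp n (\<Lambda> 0 \<omega>))" using pp_int by auto
    show "integrable M (\<lambda>\<omega>. \<Lambda> 0 \<omega> / real m)" using integrable_id by auto
    show "\<And>x. 0 < x \<Longrightarrow> (\<Sum>n\<in>F. pp n x) \<le> x / real m" using F by (intro pp_tail) auto
  qed
  also have "\<dots> = mu / real m" unfolding ex_def mu_def by simp
  finally show ?thesis .
qed

lemma sum_ex_qq:
  assumes F: "finite F"
  shows "(\<Sum>n\<in>F. ex (qq n)) \<le> mu"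
proof -
  have "(\<Sum>n\<in>F. ex (qq n)) = ex (\<lambda>x. \<Sum>n\<in>F. qq n x)" using F qq_int by (intro sum_ex) auto
  also have "\<dots> \<le> ex (\<lambda>x. x)"
  proof (rule ex_mono)
    show "integrable M (\<lambda>\<omega>. \<Sum>n\<in>F. qq n (\<Lambda> 0 \<omega>))" using qq_int by auto
    show "integrable M (\<lambda>\<omega>. \<Lambda> 0 \<omega>)" using integrable_id by auto
    fix x :: real assume x: "0 < x"
    have "(\<Sum>n\<in>F. qq n x) = x * (\<Sum>n\<in>F. pp n x)" by (simp add: qq_eq sum_distrib_left)
    also have "\<dots> \<le> x * 1" using x F by (intro mult_left_mono pp_sum_le1) auto
    finally show "(\<Sum>n\<in>F. qq n x) \<le> x" by simp
  qed
  finally show ?thesis unfolding mu_def .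
qed

lemma sum_ex_qq_tail:
  assumes F: "finite F" "1 \<le> m" "\<And>n. n \<in> F \<Longrightarrow> m \<le> n"
  shows "(\<Sum>n\<in>F. ex (qq n)) \<le> m2 / real m"
proof -
  have "(\<Sum>n\<in>F. ex (qq n)) = ex (\<lambda>x. \<Sum>n\<in>F. qq n x)" using F qq_int by (intro sum_ex) auto
  also have "\<dots> \<le> ex (\<lambda>x. x^2 / real m)"
  proof (rule ex_mono)
    show "integrable M (\<lambda>\<omega>. \<Sum>n\<in>F. qq n (\<Lambda> 0 \<omega>))" using qq_int by auto
    show "integrable M (\<lambda>\<omega>. (\<Lambda> 0 \<omega>)^2 / real m)" using integrable_pow2 by auto
    fix x :: real assume x: "0 < x"
    have "(\<Sum>n\<in>F. qq n x) = x * (\<Sum>n\<in>F. pp n x)" by (simp add: qq_eq sum_distrib_left)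
    also have "\<dots> \<le> x * (x / real m)" using x F by (intro mult_left_mono pp_tail) auto
    finally show "(\<Sum>n\<in>F. qq n x) \<le> x^2 / real m" by (simp add: power2_eq_square)
  qed
  also have "\<dots> = m2 / real m" unfolding ex_def m2_def by simp
  finally show ?thesis .
qed

lemma bias2: assumes N: "0 < N" shows "\<bar>ex (h2 N) - m2\<bar> \<le> mr * real N powr ((2 - rr) / ss)"
proof -
  have i2: "integrable M (\<lambda>\<omega>. h2 N (\<Lambda> 0 \<omega>))"
  proof (rule Bochner_Integration.integrable_bound[OF integrable_pow2])
    show "AE x in M. norm (h2 N (\<Lambda> 0 x)) \<le> norm ((\<Lambda> 0 x)^2)" by (intro AE_I2) (simp add: h2_def)
  qed measurable
  have ir: "integrable M (\<lambda>\<omega>. TT N powr (2 - rr) * \<Lambda> 0 \<omega> powr rr)"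
    using moment_integrable[of rr] ss by auto
  have "ex (h2 N) \<le> ex (\<lambda>x. x^2)"
    by (rule ex_mono[OF i2 integrable_pow2]) (simp add: h2_def)
  moreover have "ex (\<lambda>x. x^2) - ex (h2 N) = ex (\<lambda>x. x^2 - h2 N x)"
    unfolding ex_def by (rule Bochner_Integration.integral_diff[OF integrable_pow2 i2, symmetric])
  moreover have "ex (\<lambda>x. x^2 - h2 N x) \<le> ex (\<lambda>x. TT N powr (2 - rr) * x powr rr)"
  proof (rule ex_mono)
    show "integrable M (\<lambda>\<omega>. (\<Lambda> 0 \<omega>)^2 - h2 N (\<Lambda> 0 \<omega>))" by (rule Bochner_Integration.integrable_diff[OF integrable_pow2 i2])
    show "integrable M (\<lambda>\<omega>. TT N powr (2 - rr) * \<Lambda> 0 \<omega> powr rr)" by (rule ir)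
    fix x :: real assume x: "0 < x"
    show "x^2 - h2 N x \<le> TT N powr (2 - rr) * x powr rr"
    proof (cases "x \<le> TT N")
      case True thus ?thesis using x by (simp add: h2_def)
    next
      case False
      have T: "0 < TT N" using TT_pos[OF N] .
      have e1: "x powr rr * x powr (2 - rr) = x powr 2" by (simp add: powr_add[symmetric])
      have e2: "x powr 2 = x^2" using x by (simp add: powr_realpow)
      have "x^2 = x powr rr * x powr (2 - rr)" using e1 e2 by simp
      also have "\<dots> \<le> x powr rr * TT N powr (2 - rr)"
        using False x T ss by (intro mult_left_mono powr_mono2') auto
      finally show ?thesis using False by (simp add: h2_def mult.commute)
    qed
  qed
  moreover have "ex (\<lambda>x. TT N powr (2 - rr) * x powr rr) = mr * real N powr ((2 - rr) / ss)"
    unfolding ex_def mr_def TT_def using N by (simp add: powr_powr)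
  ultimately show ?thesis unfolding m2_def ex_def by linarith
qed

lemma ex_h3: "ex (h3 N) \<le> ms"
proof -
  have i: "integrable M (\<lambda>\<omega>. \<Lambda> 0 \<omega> powr ss)" using moment_integrable[of ss] ss by auto
  have i3: "integrable M (\<lambda>\<omega>. h3 N (\<Lambda> 0 \<omega>))"
  proof (rule Bochner_Integration.integrable_bound[OF i])
    show "AE x in M. norm (h3 N (\<Lambda> 0 x)) \<le> norm (\<Lambda> 0 x powr ss)" by (intro AE_I2) (simp add: h3_def)
  qed measurable
  show ?thesis unfolding ms_def by (rule ex_mono[OF i3 i]) (simp add: h3_def)
qed

end

lemma ratio_bound:
  fixes a mu x y e :: real
  assumes mu: "0 < mu" and a: "mu / 2 \<le> a" and ae: "\<bar>a - mu\<bar> \<le> e" and y: "0 \<le> y"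
  shows "\<bar>x / a - y / mu\<bar> \<le> (2 / mu) * \<bar>x - y\<bar> + (2 / mu^2) * y * e"
proof -
  have apos: "0 < a" using mu a by linarith
  have inv: "1 / a \<le> 2 / mu" using mu a apos by (simp add: field_simps)
  have eq: "x / a - y / mu = (x - y) * (1 / a) + y * (mu - a) * (1 / a) * (1 / mu)"
    using apos mu by (simp add: field_simps)
  have t1: "\<bar>(x - y) * (1 / a)\<bar> \<le> \<bar>x - y\<bar> * (2 / mu)"
  proof -
    have "\<bar>(x - y) * (1 / a)\<bar> = \<bar>x - y\<bar> * (1 / a)" using apos by (simp add: abs_mult)
    also have "\<dots> \<le> \<bar>x - y\<bar> * (2 / mu)" using inv by (intro mult_left_mono) auto
    finally show ?thesis .
  qed
  have "\<bar>y * (mu - a) * (1 / a) * (1 / mu)\<bar> = y * \<bar>mu - a\<bar> * (1 / a) * (1 / mu)"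
    using y apos mu by (simp add: abs_mult)
  also have "\<dots> \<le> y * e * (2 / mu) * (1 / mu)"
    using y apos mu ae inv by (intro mult_right_mono mult_mono) (auto simp: abs_minus_commute)
  finally have t2: "\<bar>y * (mu - a) * (1 / a) * (1 / mu)\<bar> \<le> y * e * (2 / mu) * (1 / mu)" .
  have "\<bar>x / a - y / mu\<bar> \<le> \<bar>(x - y) * (1 / a)\<bar> + \<bar>y * (mu - a) * (1 / a) * (1 / mu)\<bar>"
    unfolding eq by (rule abs_triangle_ineq)
  also have "\<dots> \<le> \<bar>x - y\<bar> * (2 / mu) + y * e * (2 / mu) * (1 / mu)" using t1 t2 by linarith
  also have "\<dots> = (2 / mu) * \<bar>x - y\<bar> + (2 / mu^2) * y * e" by (simp add: power2_eq_square field_simps)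
  finally show ?thesis .
qed

lemma dTV_bound:
  fixes x y :: "nat \<Rightarrow> real"
  assumes "\<And>K. (\<Sum>n<K. \<bar>x n - y n\<bar>) \<le> B"
  shows "dTV x y \<le> B / 2"
  unfolding dTV_def using suminf_le_bound_nonneg[of "\<lambda>n. \<bar>x n - y n\<bar>" B, OF _ assms] by simp

lemma powr_le_kappa: "1 \<le> (N::real) \<Longrightarrow> k \<le> e \<Longrightarrow> N powr (- e) \<le> N powr (- k)"
  by (intro powr_mono) auto

context iid_tail begin

lemma avg_nonneg: "\<omega> \<in> space M \<Longrightarrow> (\<And>x. 0 < x \<Longrightarrow> 0 \<le> h x) \<Longrightarrow> 0 \<le> avg N h \<omega>"
  unfolding avg_def using pos by (intro divide_nonneg_nonneg sum_nonneg) auto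

lemma avg_pp_tail:
  assumes \<omega>: "\<omega> \<in> space M" and F: "finite F" "1 \<le> m" "\<And>n. n \<in> F \<Longrightarrow> m \<le> n"
  shows "(\<Sum>n\<in>F. avg N (pp n) \<omega>) \<le> avg N (\<lambda>x. x) \<omega> / real m"
proof -
  have "(\<Sum>n\<in>F. avg N (pp n) \<omega>) = (\<Sum>i<N. \<Sum>n\<in>F. pp n (\<Lambda> i \<omega>)) / real N"
    unfolding avg_def by (simp add: sum_divide_distrib[symmetric] sum.swap[of _ F])
  also have "\<dots> \<le> (\<Sum>i<N. \<Lambda> i \<omega> / real m) / real N"
    using pos[OF \<omega>] F by (intro divide_right_mono sum_mono pp_tail) (auto intro: less_imp_le)
  also have "\<dots> = avg N (\<lambda>x. x) \<omega> / real m"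
    unfolding avg_def by (simp add: sum_divide_distrib[symmetric])
  finally show ?thesis .
qed

lemma avg_qq_tail:
  assumes \<omega>: "\<omega> \<in> space M" and F: "finite F" "1 \<le> m" "\<And>n. n \<in> F \<Longrightarrow> m \<le> n"
  shows "(\<Sum>n\<in>F. avg N (qq n) \<omega>) \<le> avg N (\<lambda>x. x^2) \<omega> / real m"
proof -
  have "(\<Sum>n\<in>F. avg N (qq n) \<omega>) = (\<Sum>i<N. \<Lambda> i \<omega> * (\<Sum>n\<in>F. pp n (\<Lambda> i \<omega>))) / real N"
    unfolding avg_def by (simp add: sum_divide_distrib[symmetric] sum.swap[of _ F] qq_eq sum_distrib_left)
  also have "\<dots> \<le> (\<Sum>i<N. \<Lambda> i \<omega> * (\<Lambda> i \<omega> / real m)) / real N"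
    using pos[OF \<omega>] F by (intro divide_right_mono sum_mono mult_left_mono pp_tail) (auto intro: less_imp_le)
  also have "\<dots> = avg N (\<lambda>x. x^2) \<omega> / real m"
    unfolding avg_def by (simp add: sum_divide_distrib[symmetric] power2_eq_square)
  finally show ?thesis .
qed

lemma JJ_facts:
  assumes "\<omega> \<in> JJ N"
  shows "\<omega> \<in> space M" "\<And>i. i < N \<Longrightarrow> \<Lambda> i \<omega> \<le> TT N"
    "\<bar>avg N (\<lambda>x. x) \<omega> - mu\<bar> < ep N"
    "\<bar>avg N (h2 N) \<omega> - ex (h2 N)\<bar> < ep N"
    "\<bar>avg N (h3 N) \<omega> - ex (h3 N)\<bar> < 1"
    "\<And>n. n \<le> nn0 N \<Longrightarrow> \<bar>avg N (pp n) \<omega> - ex (pp n)\<bar> < dl N"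
    "\<And>n. n \<le> nn0 N \<Longrightarrow> \<bar>avg N (qq n) \<omega> - ex (qq n)\<bar> < dl N"
  using assms apply (auto simp: JJ_def B0_def B1_def B2_def B3_def mu_def not_le)[5]
  using assms apply (simp add: JJ_def B4_def, meson not_le)
  using assms by (simp add: JJ_def B5_def, meson not_le)

lemma mu_eq: "avg N (\<lambda>x. x) \<omega> = cap_mu (\<lambda>i. \<Lambda> i \<omega>) N"
  by (simp add: avg_def cap_mu_def)

lemma f_eq: "avg N (pp n) \<omega> = cap_f (\<lambda>i. \<Lambda> i \<omega>) N n"
  by (simp add: avg_def cap_f_def pp_def)

lemma g_eq: "0 < N \<Longrightarrow> cap_g (\<lambda>i. \<Lambda> i \<omega>) N n = avg N (qq n) \<omega> / cap_mu (\<lambda>i. \<Lambda> i \<omega>) N"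
  by (simp add: avg_def cap_g_def qq_def cap_mu_def)

lemma nu_eq: "0 < N \<Longrightarrow> cap_nu (\<lambda>i. \<Lambda> i \<omega>) N = avg N (\<lambda>x. x^2) \<omega> / cap_mu (\<lambda>i. \<Lambda> i \<omega>) N"
  by (simp add: avg_def cap_nu_def cap_mu_def)

lemma h2_avg: "(\<And>i. i < N \<Longrightarrow> \<Lambda> i \<omega> \<le> TT N) \<Longrightarrow> avg N (h2 N) \<omega> = avg N (\<lambda>x. x^2) \<omega>"
  unfolding avg_def h2_def by (intro arg_cong2[where f="(/)"] sum.cong) auto

lemma h3_avg: "(\<And>i. i < N \<Longrightarrow> \<Lambda> i \<omega> \<le> TT N) \<Longrightarrow> avg N (h3 N) \<omega> = avg N (\<lambda>x. x powr ss) \<omega>"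
  unfolding avg_def h3_def by (intro arg_cong2[where f="(/)"] sum.cong) auto

lemma n0_dl: assumes N: "0 < N" shows "(real (nn0 N) + 1) * dl N \<le> 2 * real N powr (- 1/8)"
  "1 / (real (nn0 N) + 1) \<le> real N powr (- 1/8)"
proof -
  have "(real (nn0 N) + 1) * dl N \<le> 2 * real N powr (1/8) * dl N"
    using nn0_bound(1)[OF N] by (intro mult_right_mono) (auto simp: dl_def)
  also have "\<dots> = 2 * (real N powr (1/8) * real N powr (- 1/4))" by (simp add: dl_def)
  also have "real N powr (1/8) * real N powr (- 1/4) = real N powr (- 1/8)"
    by (simp add: powr_add[symmetric])
  finally show "(real (nn0 N) + 1) * dl N \<le> 2 * real N powr (- 1/8)" by simp
  have "1 / (real (nn0 N) + 1) \<le> 1 / real N powr (1/8)"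
    using nn0_bound(2)[OF N] N by (intro divide_left_mono) auto
  also have "\<dots> = real N powr (- 1/8)" by (simp add: powr_minus_divide)
  finally show "1 / (real (nn0 N) + 1) \<le> real N powr (- 1/8)" .
qed

end

context iid_tail begin

lemma mr_nonneg: "0 \<le> mr" unfolding mr_def by simp
lemma m2_nonneg: "0 \<le> m2" unfolding m2_def by simp

context
  fixes N \<omega>
  assumes N: "0 < N" and om: "\<omega> \<in> JJ N" and ep1: "ep N \<le> 1" and ep2: "ep N \<le> mu / 2" and mupos: "0 < mu"
begin

abbreviation "a \<equiv> cap_mu (\<lambda>i. \<Lambda> i \<omega>) N"
abbreviation "A2 \<equiv> avg N (\<lambda>x. x^2) \<omega>"

lemma sp: "\<omega> \<in> space M" using JJ_facts(1)[OF om] .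
lemma le_T: "i < N \<Longrightarrow> \<Lambda> i \<omega> \<le> TT N" using JJ_facts(2)[OF om] .

lemma a_close: "\<bar>a - mu\<bar> \<le> ep N" using JJ_facts(3)[OF om] mu_eq[of N \<omega>] by simp
lemma a_ge: "mu / 2 \<le> a" using a_close ep2 by linarith
lemma a_le: "a \<le> mu + 1" using a_close ep1 by linarith
lemma a_pos: "0 < a" using a_ge mupos by linarith

lemma N1: "1 \<le> real N" using N by simp

lemma small_pow: "real N powr ((2 - rr) / ss) \<le> 1"
proof -
  have "(2 - rr) / ss \<le> 0" using ss by (simp add: divide_nonpos_pos)
  hence "real N powr ((2 - rr) / ss) \<le> real N powr 0" using N1 by (intro powr_mono) auto
  thus ?thesis using N by simp
qed

lemma A2_close: "\<bar>A2 - m2\<bar> \<le> ep N + mr * real N powr ((2 - rr) / ss)"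
proof -
  have "A2 = avg N (h2 N) \<omega>" using h2_avg[of N \<omega>] le_T by simp
  thus ?thesis using JJ_facts(4)[OF om] bias2[OF N] by linarith
qed

lemma A2_le: "A2 \<le> m2 + 1 + mr"
proof -
  have "mr * real N powr ((2 - rr) / ss) \<le> mr * 1" using small_pow mr_nonneg by (intro mult_left_mono) auto
  thus ?thesis using A2_close ep1 by linarith
qed

lemma nu_bound: "\<bar>cap_nu (\<lambda>i. \<Lambda> i \<omega>) N - m2 / mu\<bar>
   \<le> (2 / mu) * (ep N + mr * real N powr ((2 - rr) / ss)) + (2 / mu^2) * m2 * ep N"
proof -
  have "\<bar>A2 / a - m2 / mu\<bar> \<le> (2 / mu) * \<bar>A2 - m2\<bar> + (2 / mu^2) * m2 * ep N"
    by (rule ratio_bound[OF mupos a_ge a_close m2_nonneg])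
  also have "(2 / mu) * \<bar>A2 - m2\<bar> \<le> (2 / mu) * (ep N + mr * real N powr ((2 - rr) / ss))"
    using A2_close mupos by (intro mult_left_mono) auto
  finally show ?thesis using nu_eq[OF N, of \<omega>] by simp
qed

lemma f_sum: "(\<Sum>n<K. \<bar>cap_f (\<lambda>i. \<Lambda> i \<omega>) N n - ex (pp n)\<bar>) \<le> (2 * mu + 3) * real N powr (- 1/8)"
proof -
  let ?x = "\<lambda>n. avg N (pp n) \<omega>" and ?y = "\<lambda>n. ex (pp n)"
  let ?n0 = "nn0 N"
  have xn: "0 \<le> ?x n" for n using sp by (intro avg_nonneg) (auto intro!: pp_nonneg)
  have "(\<Sum>n<K. \<bar>?x n - ?y n\<bar>) \<le> (\<Sum>n\<le>?n0. \<bar>?x n - ?y n\<bar>) + (\<Sum>n\<in>{?n0<..<K}. ?x n) + (\<Sum>n\<in>{?n0<..<K}. ?y n)"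
    by (rule split_abs_sum[OF xn ex_pp_nonneg])
  also have "(\<Sum>n\<le>?n0. \<bar>?x n - ?y n\<bar>) \<le> (\<Sum>n\<le>?n0. dl N)"
    using JJ_facts(6)[OF om] by (intro sum_mono) (auto intro: less_imp_le)
  also have "\<dots> = (real ?n0 + 1) * dl N" by simp
  also have "\<dots> \<le> 2 * real N powr (- 1/8)" by (rule n0_dl(1)[OF N])
  also have "(\<Sum>n\<in>{?n0<..<K}. ?x n) \<le> avg N (\<lambda>x. x) \<omega> / real (Suc ?n0)"
    by (rule avg_pp_tail[OF sp]) auto
  also have "avg N (\<lambda>x. x) \<omega> / real (Suc ?n0) = a * (1 / (real ?n0 + 1))" by (simp add: mu_eq)
  also have "\<dots> \<le> (mu + 1) * real N powr (- 1/8)"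
    using a_le a_pos n0_dl(2)[OF N] by (intro mult_mono) auto
  also have "(\<Sum>n\<in>{?n0<..<K}. ?y n) \<le> mu / real (Suc ?n0)"
    by (rule sum_ex_pp_tail) auto
  also have "mu / real (Suc ?n0) = mu * (1 / (real ?n0 + 1))" by simp
  also have "\<dots> \<le> mu * real N powr (- 1/8)"
    using mupos n0_dl(2)[OF N] by (intro mult_left_mono) auto
  finally show ?thesis by (simp add: f_eq algebra_simps)
qed

lemma g_sum: "(\<Sum>n<K. \<bar>cap_g (\<lambda>i. \<Lambda> i \<omega>) N n - ex (qq n) / mu\<bar>)
   \<le> (4 / mu + 2 * (m2 + 1 + mr) / mu + m2 / mu) * real N powr (- 1/8) + (2 / mu) * ep N"
proof -
  let ?G = "\<lambda>n. avg N (qq n) \<omega>"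
  let ?x = "\<lambda>n. ?G n / a" and ?y = "\<lambda>n. ex (qq n) / mu"
  let ?n0 = "nn0 N"
  have Gn: "0 \<le> ?G n" for n using sp by (intro avg_nonneg) (auto simp: qq_eq intro!: mult_nonneg_nonneg pp_nonneg)
  have xn: "0 \<le> ?x n" for n using Gn a_pos by simp
  have yn: "0 \<le> ?y n" for n using ex_qq_nonneg mupos by simp
  have "(\<Sum>n<K. \<bar>?x n - ?y n\<bar>) \<le> (\<Sum>n\<le>?n0. \<bar>?x n - ?y n\<bar>) + (\<Sum>n\<in>{?n0<..<K}. ?x n) + (\<Sum>n\<in>{?n0<..<K}. ?y n)"
    by (rule split_abs_sum[OF xn yn])
  also have "(\<Sum>n\<le>?n0. \<bar>?x n - ?y n\<bar>) \<le> (\<Sum>n\<le>?n0. (2 / mu) * dl N + (2 / mu^2) * ex (qq n) * ep N)"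
  proof (rule sum_mono)
    fix n assume n: "n \<in> {..?n0}"
    have "\<bar>?x n - ?y n\<bar> \<le> (2 / mu) * \<bar>?G n - ex (qq n)\<bar> + (2 / mu^2) * ex (qq n) * ep N"
      by (rule ratio_bound[OF mupos a_ge a_close ex_qq_nonneg])
    also have "(2 / mu) * \<bar>?G n - ex (qq n)\<bar> \<le> (2 / mu) * dl N"
      using JJ_facts(7)[OF om, of n] n mupos by (intro mult_left_mono) auto
    finally show "\<bar>?x n - ?y n\<bar> \<le> (2 / mu) * dl N + (2 / mu^2) * ex (qq n) * ep N" by simp
  qed
  also have "\<dots> = (real ?n0 + 1) * ((2 / mu) * dl N) + ((2 / mu^2) * ep N) * (\<Sum>n\<le>?n0. ex (qq n))"
    by (simp add: sum.distrib sum_distrib_left sum_divide_distrib mult_ac add_ac)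
  also have "\<dots> \<le> (2 / mu) * (2 * real N powr (- 1/8)) + (2 / mu^2) * ep N * mu"
  proof -
    have e1: "(real ?n0 + 1) * ((2 / mu) * dl N) = (2 / mu) * ((real ?n0 + 1) * dl N)" by simp
    have b1: "(2 / mu) * ((real ?n0 + 1) * dl N) \<le> (2 / mu) * (2 * real N powr (- 1/8))"
      using n0_dl(1)[OF N] mupos by (intro mult_left_mono) auto
    have b2: "((2 / mu^2) * ep N) * (\<Sum>n\<le>?n0. ex (qq n)) \<le> (2 / mu^2) * ep N * mu"
      using sum_ex_qq[of "{..?n0}"] by (intro mult_left_mono) (auto simp: ep_def)
    show ?thesis using e1 b1 b2 by linarith
  qed
  also have "(\<Sum>n\<in>{?n0<..<K}. ?x n) \<le> (2 / mu) * (m2 + 1 + mr) * real N powr (- 1/8)"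
  proof -
    have "(\<Sum>n\<in>{?n0<..<K}. ?x n) = (\<Sum>n\<in>{?n0<..<K}. ?G n) * (1 / a)"
      by (simp add: sum_divide_distrib)
    also have "\<dots> \<le> (A2 / real (Suc ?n0)) * (2 / mu)"
    proof (rule mult_mono)
      show "(\<Sum>n\<in>{?n0<..<K}. ?G n) \<le> A2 / real (Suc ?n0)" by (rule avg_qq_tail[OF sp]) auto
      show "1 / a \<le> 2 / mu" using a_ge a_pos mupos by (simp add: field_simps)
      show "0 \<le> A2 / real (Suc ?n0)" using sp by (intro divide_nonneg_nonneg avg_nonneg) auto
    qed (use a_pos in auto)
    also have "(A2 / real (Suc ?n0)) * (2 / mu) \<le> ((m2 + 1 + mr) * real N powr (- 1/8)) * (2 / mu)"
    proof (rule mult_right_mono)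
      have "A2 / real (Suc ?n0) = A2 * (1 / (real ?n0 + 1))" by simp
      also have "\<dots> \<le> (m2 + 1 + mr) * real N powr (- 1/8)"
        using A2_le n0_dl(2)[OF N] m2_nonneg mr_nonneg by (intro mult_mono) auto
      finally show "A2 / real (Suc ?n0) \<le> (m2 + 1 + mr) * real N powr (- 1/8)" .
    qed (use mupos in auto)
    also have "((m2 + 1 + mr) * real N powr (- 1/8)) * (2 / mu) = (2 / mu) * (m2 + 1 + mr) * real N powr (- 1/8)"
      by (simp add: mult_ac)
    finally show ?thesis .
  qed
  also have "(\<Sum>n\<in>{?n0<..<K}. ?y n) \<le> (m2 / mu) * real N powr (- 1/8)"
  proof -
    have "(\<Sum>n\<in>{?n0<..<K}. ?y n) = (\<Sum>n\<in>{?n0<..<K}. ex (qq n)) / mu"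
      by (simp add: sum_divide_distrib)
    also have "\<dots> \<le> (m2 / real (Suc ?n0)) / mu"
      using mupos by (intro divide_right_mono sum_ex_qq_tail) auto
    also have "\<dots> = (m2 / mu) * (1 / (real ?n0 + 1))" by simp
    also have "\<dots> \<le> (m2 / mu) * real N powr (- 1/8)"
      using n0_dl(2)[OF N] m2_nonneg mupos by (intro mult_left_mono) auto
    finally show ?thesis .
  qed
  finally have ch: "(\<Sum>n<K. \<bar>?x n - ?y n\<bar>) \<le> (2 / mu) * (2 * real N powr (- 1/8)) + (2 / mu^2) * ep N * mu
     + (2 / mu) * (m2 + 1 + mr) * real N powr (- 1/8) + (m2 / mu) * real N powr (- 1/8)" by (smt (verit))
  have eqn: "(2 / mu) * (2 * real N powr (- 1/8)) + (2 / mu^2) * ep N * mu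
     + (2 / mu) * (m2 + 1 + mr) * real N powr (- 1/8) + (m2 / mu) * real N powr (- 1/8)
     = (4 / mu + 2 * (m2 + 1 + mr) / mu + m2 / mu) * real N powr (- 1/8) + (2 / mu) * ep N"
    using mupos by (simp add: power2_eq_square field_simps)
  have "(\<Sum>n<K. \<bar>?x n - ?y n\<bar>) \<le> (4 / mu + 2 * (m2 + 1 + mr) / mu + m2 / mu) * real N powr (- 1/8) + (2 / mu) * ep N"
    using ch eqn by linarith
  thus ?thesis using g_eq[OF N, of \<omega>] by simp
qed

lemma C3_sum:
  assumes e: "0 \<le> p" "p \<le> ss"
  shows "(\<Sum>i<N. \<Lambda> i \<omega> powr p) / real N \<le> 2 + ms"
proof -
  have "(\<Sum>i<N. \<Lambda> i \<omega> powr p) / real N \<le> (\<Sum>i<N. 1 + \<Lambda> i \<omega> powr ss) / real N"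
  proof (intro divide_right_mono sum_mono)
    fix i assume "i \<in> {..<N}"
    have l: "0 < \<Lambda> i \<omega>" using pos[OF sp] .
    show "\<Lambda> i \<omega> powr p \<le> 1 + \<Lambda> i \<omega> powr ss"
    proof (cases "\<Lambda> i \<omega> \<le> 1")
      case True
      have "\<Lambda> i \<omega> powr p \<le> 1" using True l e by (intro powr_le1) auto
      thus ?thesis by (smt (verit) powr_ge_zero)
    next
      case False
      have "\<Lambda> i \<omega> powr p \<le> \<Lambda> i \<omega> powr ss" using False e by (intro powr_mono) auto
      thus ?thesis by simp
    qed
  qed simp
  also have "\<dots> = 1 + avg N (\<lambda>x. x powr ss) \<omega>"
    using N by (simp add: sum.distrib avg_def add_divide_distrib)
  also have "avg N (\<lambda>x. x powr ss) \<omega> = avg N (h3 N) \<omega>" using h3_avg[of N \<omega>] le_T by simp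
  also have "\<dots> \<le> 1 + ms" using JJ_facts(5)[OF om] ex_h3[of N] by linarith
  finally show ?thesis by simp
qed

end

end

lemma half_le_real: "0 \<le> (x::real) \<Longrightarrow> x / 2 \<le> x" by simp

context iid_tail begin

theorem main:
  assumes mupos: "0 < mu" and nu1: "1 < m2 / mu"
  shows "\<exists>J. (\<forall>N. J N \<in> sets M) \<and> (\<lambda>N. prob (J N)) \<longlonglongrightarrow> 1 \<and>
     cond_C1 mu (m2 / mu) (\<lambda>N. (\<lambda>\<omega>. (\<lambda>i. \<Lambda> i \<omega>)) ` J N) \<and>
     cond_C2 (\<lambda>n. ex (pp n)) (\<lambda>n. ex (qq n) / mu) (\<lambda>N. (\<lambda>\<omega>. (\<lambda>i. \<Lambda> i \<omega>)) ` J N) \<and>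
     cond_C3 (\<lambda>N. (\<lambda>\<omega>. (\<lambda>i. \<Lambda> i \<omega>)) ` J N)"
proof -
  have eplim: "(\<lambda>N. ep N) \<longlonglongrightarrow> 0"
    using powr_to_0[of "- al" 1] al by (simp add: ep_def)
  have "0 < min 1 (mu / 2)" using mupos by simp
  hence ev: "\<forall>\<^sub>F N in sequentially. ep N < min 1 (mu / 2)" using order_tendstoD(2)[OF eplim] by blast
  have "\<forall>\<^sub>F N in sequentially. 0 < N \<and> ep N \<le> 1 \<and> ep N \<le> mu / 2"
    using ev eventually_gt_at_top[of 0] by eventually_elim auto
  then obtain N0 where N0: "\<And>N. N0 \<le> N \<Longrightarrow> 0 < N \<and> ep N \<le> 1 \<and> ep N \<le> mu / 2"
    unfolding eventually_sequentially by blast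
  define \<kappa> where "\<kappa> = min al ((rr - 2) / ss)"
  have kpos: "0 < \<kappa>" using al ss by (simp add: \<kappa>_def)
  have "\<kappa> \<le> al" by (simp add: \<kappa>_def)
  hence k8: "\<kappa> \<le> 1/8" using al by linarith
  have ep_k: "ep N \<le> real N powr (- \<kappa>)" if "0 < N" for N
    unfolding ep_def using that by (intro powr_le_kappa) (auto simp: \<kappa>_def)
  have p8_k: "real N powr (- 1/8) \<le> real N powr (- \<kappa>)" if "0 < N" for N
    using powr_le_kappa[of "real N" \<kappa> "1/8"] that k8 by simp
  have prr_k: "real N powr ((2 - rr) / ss) \<le> real N powr (- \<kappa>)" if "0 < N" for N
  proof -
    have "(2 - rr) / ss = - ((rr - 2) / ss)" by (metis minus_diff_eq minus_divide_left)
    thus ?thesis using powr_le_kappa[of "real N" \<kappa> "(rr - 2) / ss"] that by (simp add: \<kappa>_def)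
  qed
  have Npk: "0 \<le> real N powr (- \<kappa>)" for N by simp
  let ?S = "\<lambda>N. (\<lambda>\<omega>. (\<lambda>i. \<Lambda> i \<omega>)) ` JJ N"
  define C1c where "C1c = 1 + (2 / mu) * (1 + mr) + 2 * m2 / mu^2"
  have C1b: "\<forall>N\<ge>N0. \<forall>lam\<in>?S N. \<bar>cap_mu lam N - mu\<bar> \<le> C1c * real N powr (- \<kappa>) \<and>
      \<bar>cap_nu lam N - m2 / mu\<bar> \<le> C1c * real N powr (- \<kappa>)"
    unfolding C1c_def
  proof (intro allI impI ballI conjI)
    fix N lam assume N: "N0 \<le> N" and lam: "lam \<in> ?S N"
    then obtain \<omega> where om: "\<omega> \<in> JJ N" and lam_eq: "lam = (\<lambda>i. \<Lambda> i \<omega>)" by auto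
    have N': "0 < N" "ep N \<le> 1" "ep N \<le> mu / 2" using N0[OF N] by auto
    have Cge: "1 \<le> 1 + (2 / mu) * (1 + mr) + 2 * m2 / mu^2"
      using mupos mr_nonneg m2_nonneg by simp
    have "\<bar>cap_mu lam N - mu\<bar> \<le> ep N" using a_close[OF N'(1) om N'(2) N'(3) mupos] lam_eq by simp
    also have "\<dots> \<le> 1 * real N powr (- \<kappa>)" using ep_k N' by simp
    also have "\<dots> \<le> (1 + (2 / mu) * (1 + mr) + 2 * m2 / mu^2) * real N powr (- \<kappa>)"
      by (intro mult_right_mono Cge Npk)
    finally show "\<bar>cap_mu lam N - mu\<bar> \<le> (1 + (2 / mu) * (1 + mr) + 2 * m2 / mu^2) * real N powr (- \<kappa>)" .
    have "\<bar>cap_nu lam N - m2 / mu\<bar> \<le> (2 / mu) * (ep N + mr * real N powr ((2 - rr) / ss)) + (2 / mu^2) * m2 * ep N"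
      using nu_bound[OF N'(1) om N'(2) N'(3) mupos] lam_eq by simp
    also have "\<dots> \<le> (2 / mu) * (real N powr (- \<kappa>) + mr * real N powr (- \<kappa>)) + (2 / mu^2) * m2 * real N powr (- \<kappa>)"
      using ep_k[OF N'(1)] prr_k[OF N'(1)] mupos mr_nonneg m2_nonneg
      by (intro add_mono mult_left_mono) auto
    also have "\<dots> = ((2 / mu) * (1 + mr) + 2 * m2 / mu^2) * real N powr (- \<kappa>)"
      by (simp add: algebra_simps add_divide_distrib)
    also have "\<dots> \<le> (1 + (2 / mu) * (1 + mr) + 2 * m2 / mu^2) * real N powr (- \<kappa>)"
      by (intro mult_right_mono Npk) simp
    finally show "\<bar>cap_nu lam N - m2 / mu\<bar> \<le> (1 + (2 / mu) * (1 + mr) + 2 * m2 / mu^2) * real N powr (- \<kappa>)" .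
  qed
  have C1: "cond_C1 mu (m2 / mu) ?S"
    unfolding cond_C1_def using mupos nu1 kpos C1b by blast
  define Cg where "Cg = 4 / mu + 2 * (m2 + 1 + mr) / mu + m2 / mu"
  have Cg: "0 \<le> Cg" unfolding Cg_def using mupos m2_nonneg mr_nonneg by simp
  define C where "C = (2 * mu + 3) + Cg + 2 / mu"
  have C2b: "\<forall>N\<ge>N0. \<forall>lam\<in>?S N. dTV (cap_f lam N) (\<lambda>n. ex (pp n)) \<le> C * real N powr (- \<kappa>) \<and>
      dTV (cap_g lam N) (\<lambda>n. ex (qq n) / mu) \<le> C * real N powr (- \<kappa>)"
  proof (intro allI impI ballI conjI)
    fix N lam assume N: "N0 \<le> N" and lam: "lam \<in> ?S N"
    then obtain \<omega> where om: "\<omega> \<in> JJ N" and lam_eq: "lam = (\<lambda>i. \<Lambda> i \<omega>)" by auto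
    have N': "0 < N" "ep N \<le> 1" "ep N \<le> mu / 2" using N0[OF N] by auto
    have "dTV (cap_f lam N) (\<lambda>n. ex (pp n)) \<le> ((2 * mu + 3) * real N powr (- 1/8)) / 2"
      by (rule dTV_bound) (use f_sum[OF N'(1) om N'(2) N'(3) mupos] lam_eq in simp)
    also have "\<dots> \<le> (2 * mu + 3) * real N powr (- 1/8)" using mupos by simp
    also have "\<dots> \<le> (2 * mu + 3) * real N powr (- \<kappa>)"
      using p8_k[OF N'(1)] mupos by (intro mult_left_mono) auto
    also have "\<dots> \<le> C * real N powr (- \<kappa>)"
      unfolding C_def using Cg mupos by (intro mult_right_mono Npk) auto
    finally show "dTV (cap_f lam N) (\<lambda>n. ex (pp n)) \<le> C * real N powr (- \<kappa>)" .
    have "dTV (cap_g lam N) (\<lambda>n. ex (qq n) / mu) \<le> (Cg * real N powr (- 1/8) + (2 / mu) * ep N) / 2"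
      by (rule dTV_bound) (use g_sum[OF N'(1) om N'(2) N'(3) mupos] lam_eq in \<open>simp add: Cg_def\<close>)
    also have "\<dots> \<le> Cg * real N powr (- 1/8) + (2 / mu) * ep N"
    proof -
      have "0 \<le> Cg * real N powr (- 1/8) + (2 / mu) * ep N"
        using Cg mupos by (intro add_nonneg_nonneg mult_nonneg_nonneg) (auto simp: ep_def)
      thus ?thesis by (rule half_le_real)
    qed
    also have "\<dots> \<le> Cg * real N powr (- \<kappa>) + (2 / mu) * real N powr (- \<kappa>)"
      using p8_k[OF N'(1)] ep_k[OF N'(1)] Cg mupos by (intro add_mono mult_left_mono) auto
    also have "\<dots> \<le> C * real N powr (- \<kappa>)"
      unfolding C_def using mupos by (simp add: algebra_simps)
    finally show "dTV (cap_g lam N) (\<lambda>n. ex (qq n) / mu) \<le> C * real N powr (- \<kappa>)" .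
  qed
  have C2: "cond_C2 (\<lambda>n. ex (pp n)) (\<lambda>n. ex (qq n) / mu) ?S"
    unfolding cond_C2_def using kpos C2b by blast
  have C3b: "\<forall>N\<ge>N0. \<forall>lam\<in>?S N. (\<Sum>i<N. lam i powr (ss + 1 - 1 - \<epsilon>)) / real N \<le> 2 + ms \<and>
            (\<forall>i<N. lam i \<le> real N powr (1 / (ss + 1 - 1) + \<epsilon>))"
    if e: "0 < \<epsilon>" and e2: "1 / (ss + 1 - 1) + \<epsilon> < 1 / 2" for \<epsilon> :: real
  proof (intro allI impI ballI conjI)
    fix N lam assume N: "N0 \<le> N" and lam: "lam \<in> ?S N"
    then obtain \<omega> where om: "\<omega> \<in> JJ N" and lam_eq: "lam = (\<lambda>i. \<Lambda> i \<omega>)" by auto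
    have N': "0 < N" "ep N \<le> 1" "ep N \<le> mu / 2" using N0[OF N] by auto
    have "0 < 1 / ss" using ss by simp
    moreover have "1 / (ss + 1 - 1) = 1 / ss" by simp
    ultimately have "\<epsilon> < 1/2" using e2 by linarith
    hence p: "0 \<le> ss - \<epsilon>" "ss - \<epsilon> \<le> ss" using ss e by auto
    show "(\<Sum>i<N. lam i powr (ss + 1 - 1 - \<epsilon>)) / real N \<le> 2 + ms"
      using C3_sum[OF N'(1) om N'(2) N'(3) mupos p] lam_eq by simp
    fix i assume i: "i < N"
    have "lam i \<le> TT N" using le_T[OF N'(1) om N'(2) N'(3) mupos i] lam_eq by simp
    also have "TT N \<le> real N powr (1 / (ss + 1 - 1) + \<epsilon>)"
      unfolding TT_def using N' e by (intro powr_mono) auto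
    finally show "lam i \<le> real N powr (1 / (ss + 1 - 1) + \<epsilon>)" .
  qed
  have C3: "cond_C3 ?S"
    unfolding cond_C3_def
    apply (rule exI[of _ "ss + 1"])
    apply (rule conjI)
    using ss apply simp
    apply (intro allI impI)
    subgoal for \<epsilon> using C3b[of \<epsilon>] by blast
    done
  show ?thesis using JJ_sets JJ_lim C1 C2 C3 by blast
qed

end

theorem theorem1p4:
  fixes M :: "'a measure" and \<Lambda> :: "nat \<Rightarrow> 'a \<Rightarrow> real" and c \<tau> :: real
  assumes "prob_space M"
    and meas: "\<And>i. \<Lambda> i \<in> borel_measurable M"
    and indep: "prob_space.indep_vars M (\<lambda>_. borel) \<Lambda> UNIV"
    and ident: "\<And>i. distr M borel (\<Lambda> i) = distr M borel (\<Lambda> 0)"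
    and pos: "\<And>i \<omega>. \<omega> \<in> space M \<Longrightarrow> 0 < \<Lambda> i \<omega>"
    and "0 < c" and "3 < \<tau>"
    and tail: "\<And>x. 0 < x \<Longrightarrow> 1 - measure M {\<omega>\<in>space M. \<Lambda> 0 \<omega> \<le> x} \<le> c * x powr (1 - \<tau>)"
    and nu_gt: "(\<integral>\<omega>. (\<Lambda> 0 \<omega>)^2 \<partial>M) / (\<integral>\<omega>. \<Lambda> 0 \<omega> \<partial>M) > 1"
  shows "\<exists>J :: nat \<Rightarrow> 'a set. (\<forall>N. J N \<in> sets M) \<and>
           (\<lambda>N. measure M (J N)) \<longlonglongrightarrow> 1 \<and>
           (let \<mu> = (\<integral>\<omega>. \<Lambda> 0 \<omega> \<partial>M);
                \<nu> = (\<integral>\<omega>. (\<Lambda> 0 \<omega>)^2 \<partial>M) / (\<integral>\<omega>. \<Lambda> 0 \<omega> \<partial>M);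
                f = (\<lambda>n. \<integral>\<omega>. exp (- \<Lambda> 0 \<omega>) * (\<Lambda> 0 \<omega>)^n / fact n \<partial>M);
                g = (\<lambda>n. (\<integral>\<omega>. exp (- \<Lambda> 0 \<omega>) * (\<Lambda> 0 \<omega>)^(n+1) / fact n \<partial>M) / \<mu>);
                S = (\<lambda>N. (\<lambda>\<omega>. (\<lambda>i. \<Lambda> i \<omega>)) ` J N)
            in cond_C1 \<mu> \<nu> S \<and> cond_C2 f g S \<and> cond_C3 S)"
  proof -
  interpret P: prob_space M by fact
  interpret T: iid_tail M \<Lambda> c "\<tau> - 1"
  proof unfold_locales
    show "\<And>i. \<Lambda> i \<in> borel_measurable M" by (rule meas)
    show "P.indep_vars (\<lambda>_. borel) \<Lambda> UNIV" by (rule indep)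
    show "\<And>i. distr M borel (\<Lambda> i) = distr M borel (\<Lambda> 0)" by (rule ident)
    show "0 < c" by fact
    show "2 < \<tau> - 1" using \<open>3 < \<tau>\<close> by simp
    show "\<And>i \<omega>. \<omega> \<in> space M \<Longrightarrow> 0 < \<Lambda> i \<omega>" by (rule pos)
    show "\<And>x. 0 < x \<Longrightarrow> 1 - P.prob {\<omega> \<in> space M. \<Lambda> 0 \<omega> \<le> x} \<le> c * x powr - (\<tau> - 1)"
      using tail by simp
  qed
  have mueq: "T.mu = (\<integral>\<omega>. \<Lambda> 0 \<omega> \<partial>M)" by (simp add: T.mu_def T.ex_def)
  have m2eq: "T.m2 = (\<integral>\<omega>. (\<Lambda> 0 \<omega>)^2 \<partial>M)" by (simp add: T.m2_def)
  have mu0: "0 \<le> T.mu" unfolding mueq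
    by (rule integral_nonneg_AE) (intro AE_I2, simp add: pos less_imp_le)
  have "T.mu \<noteq> 0" using nu_gt mueq by auto
  hence mupos: "0 < T.mu" using mu0 by simp
  have nu1: "1 < T.m2 / T.mu" using nu_gt mueq m2eq by simp
  have feq: "(\<lambda>n. \<integral>\<omega>. exp (- \<Lambda> 0 \<omega>) * (\<Lambda> 0 \<omega>)^n / fact n \<partial>M) = (\<lambda>n. T.ex (pp n))"
    by (simp add: T.ex_def pp_def)
  have geq: "(\<lambda>n. (\<integral>\<omega>. exp (- \<Lambda> 0 \<omega>) * (\<Lambda> 0 \<omega>)^(n+1) / fact n \<partial>M) / (\<integral>\<omega>. \<Lambda> 0 \<omega> \<partial>M))
      = (\<lambda>n. T.ex (qq n) / T.mu)"
    by (simp add: T.ex_def qq_def mueq)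
  from T.main[OF mupos nu1] obtain J where J1: "\<forall>N. J N \<in> sets M"
    and J2: "(\<lambda>N. measure M (J N)) \<longlonglongrightarrow> 1"
    and J3: "cond_C1 T.mu (T.m2 / T.mu) (\<lambda>N. (\<lambda>\<omega>. (\<lambda>i. \<Lambda> i \<omega>)) ` J N)"
    and J4: "cond_C2 (\<lambda>n. T.ex (pp n)) (\<lambda>n. T.ex (qq n) / T.mu) (\<lambda>N. (\<lambda>\<omega>. (\<lambda>i. \<Lambda> i \<omega>)) ` J N)"
    and J5: "cond_C3 (\<lambda>N. (\<lambda>\<omega>. (\<lambda>i. \<Lambda> i \<omega>)) ` J N)"
    by blast
  have J3': "cond_C1 (\<integral>\<omega>. \<Lambda> 0 \<omega> \<partial>M) ((\<integral>\<omega>. (\<Lambda> 0 \<omega>)^2 \<partial>M) / (\<integral>\<omega>. \<Lambda> 0 \<omega> \<partial>M))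
      (\<lambda>N. (\<lambda>\<omega>. (\<lambda>i. \<Lambda> i \<omega>)) ` J N)" using J3 unfolding mueq m2eq .
  have J4': "cond_C2 (\<lambda>n. \<integral>\<omega>. exp (- \<Lambda> 0 \<omega>) * (\<Lambda> 0 \<omega>)^n / fact n \<partial>M)
      (\<lambda>n. (\<integral>\<omega>. exp (- \<Lambda> 0 \<omega>) * (\<Lambda> 0 \<omega>)^(n+1) / fact n \<partial>M) / (\<integral>\<omega>. \<Lambda> 0 \<omega> \<partial>M))
      (\<lambda>N. (\<lambda>\<omega>. (\<lambda>i. \<Lambda> i \<omega>)) ` J N)" unfolding feq geq by (rule J4)
  show ?thesis unfolding Let_def using J1 J2 J3' J4' J5 by blast
qed

end
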